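(* Let $A$ be a normal bounded linear operator on a complex Hilbert space $\mathcal H\neq\{0\}$. Then \[ W_0(A)=\operatorname{conv}\bigl(\sigma(A)\cap\mathcal C_A\bigr), \] where $\mathcal C_A=\{z\in\mathbb C: |z|=\|A\|\}$.
   Context: The maximal numerical range $W_0(A)$ is the set of all $\lambda\in\mathbb C$ for which there exist unit vectors $x_n\in\mathcal H$ with $\|Ax_n\|\to\|A\|$ and $\langle Ax_n,x_n\rangle\to\lambda$. $\sigma(A)$ denotes the spectrum of $A$ and $\operatorname{conv}$ the convex hull. *)

theory Defs
  imports "HOL-Analysis.Analysis"
begin

class complex_vector = real_vector +
  fixes scaleC :: "complex \<Rightarrow> 'a \<Rightarrow> 'a"
  assumes scaleC_add_right: "scaleC a (x + y) = scaleC a x + scaleC a y"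
    and scaleC_add_left: "scaleC (a + b) x = scaleC a x + scaleC b x"
    and scaleC_scaleC: "scaleC a (scaleC b x) = scaleC (a * b) x"
    and scaleC_one: "scaleC 1 x = x"
    and scaleR_scaleC: "scaleR r x = scaleC (complex_of_real r) x"

class complex_inner = complex_vector + real_normed_vector +
  fixes cinner :: "'a \<Rightarrow> 'a \<Rightarrow> complex"
  assumes cinner_add_left: "cinner (x + y) z = cinner x z + cinner y z"
    and cinner_scaleC_left: "cinner (scaleC c x) y = c * cinner x y"
    and cinner_commute: "cinner y x = cnj (cinner x y)"
    and cinner_nonneg: "0 \<le> Re (cinner x x)"
    and cinner_eq_zero_iff: "cinner x x = 0 \<longleftrightarrow> x = 0"
    and norm_eq_sqrt_cinner: "norm x = sqrt (Re (cinner x x))"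

class chilbert_space = complex_inner + complete_space

text \<open>Non-vacuity: the complex numbers form a complex Hilbert space.\<close>

instantiation complex :: complex_inner
begin
definition scaleC_complex_def: "scaleC (a::complex) (x::complex) = a * x"
definition cinner_complex_def: "cinner (x::complex) y = x * cnj y"
instance
proof
  fix x y z a b :: complex and r :: real
  show "scaleC a (x + y) = scaleC a x + scaleC a y" by (simp add: scaleC_complex_def algebra_simps)
  show "scaleC (a + b) x = scaleC a x + scaleC b x" by (simp add: scaleC_complex_def algebra_simps)
  show "scaleC a (scaleC b x) = scaleC (a * b) x" by (simp add: scaleC_complex_def)
  show "scaleC 1 x = x" by (simp add: scaleC_complex_def)
  show "scaleR r x = scaleC (complex_of_real r) x" by (simp add: scaleC_complex_def scaleR_conv_of_real)
  show "cinner (x + y) z = cinner x z + cinner y z" by (simp add: cinner_complex_def algebra_simps)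
  show "cinner (scaleC a x) y = a * cinner x y" by (simp add: cinner_complex_def scaleC_complex_def)
  show "cinner y x = cnj (cinner x y)" by (simp add: cinner_complex_def mult.commute)
  show "0 \<le> Re (cinner x x)" by (simp add: cinner_complex_def)
  show "cinner x x = 0 \<longleftrightarrow> x = 0" by (simp add: cinner_complex_def)
  show "norm x = sqrt (Re (cinner x x))"
    by (simp add: cinner_complex_def complex_mult_cnj cmod_def)
qed
end

instance complex :: chilbert_space ..

definition bounded_clinear :: "('a::complex_inner \<Rightarrow> 'b::complex_inner) \<Rightarrow> bool" where
  "bounded_clinear f \<longleftrightarrow> bounded_linear f \<and> (\<forall>c x. f (scaleC c x) = scaleC c (f x))"

definition is_adjoint :: "('a::complex_inner \<Rightarrow> 'a) \<Rightarrow> ('a \<Rightarrow> 'a) \<Rightarrow> bool" where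
  "is_adjoint A B \<longleftrightarrow> (\<forall>x y. cinner (A x) y = cinner x (B y))"

definition normal_op :: "('a::complex_inner \<Rightarrow> 'a) \<Rightarrow> bool" where
  "normal_op A \<longleftrightarrow> bounded_clinear A \<and>
     (\<exists>B. bounded_clinear B \<and> is_adjoint A B \<and> (\<forall>x. A (B x) = B (A x)))"

definition op_spectrum :: "('a::complex_inner \<Rightarrow> 'a) \<Rightarrow> complex set" where
  "op_spectrum A = {l. \<not> (\<exists>B. bounded_clinear B \<and>
       (\<forall>x. B (A x - scaleC l x) = x) \<and> (\<forall>x. A (B x) - scaleC l (B x) = x))}"

definition max_numerical_range :: "('a::complex_inner \<Rightarrow> 'a) \<Rightarrow> complex set" where
  "max_numerical_range A = {l. \<exists>x :: nat \<Rightarrow> 'a. (\<forall>n. norm (x n) = 1) \<and>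
       (\<lambda>n. norm (A (x n))) \<longlonglongrightarrow> onorm A \<and>
       (\<lambda>n. cinner (A (x n)) (x n)) \<longlonglongrightarrow> l}"

end

theory Submission
  imports Defs
begin

lemma scaleC_zero_right[simp]: "scaleC c 0 = 0"
proof -
  have "scaleC c (0 + 0) = scaleC c 0 + scaleC c 0" by (rule scaleC_add_right)
  then show ?thesis by simp
qed
lemma scaleC_zero_left[simp]: "scaleC 0 x = 0"
proof -
  have "scaleC (0 + 0) x = scaleC 0 x + scaleC 0 x" by (rule scaleC_add_left)
  then show ?thesis by simp
qed
lemma scaleC_minus_right: "scaleC c (- x) = - scaleC c x"
proof -
  have "scaleC c x + scaleC c (- x) = 0" by (simp flip: scaleC_add_right)
  then show ?thesis by (rule minus_unique[symmetric])
qed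
lemma scaleC_diff_right: "scaleC c (x - y) = scaleC c x - scaleC c y"
  using scaleC_add_right[of c x "- y"] by (simp add: scaleC_minus_right)
lemma scaleC_minus_left: "scaleC (- c) x = - scaleC c x"
proof -
  have "scaleC c x + scaleC (- c) x = 0" by (simp flip: scaleC_add_left)
  then show ?thesis by (rule minus_unique[symmetric])
qed
lemma scaleC_diff_left: "scaleC (a - b) x = scaleC a x - scaleC b x"
  using scaleC_add_left[of a "- b" x] by (simp add: scaleC_minus_left)
lemma scaleC_of_real: "scaleC (complex_of_real r) x = scaleR r x"
  by (simp add: scaleR_scaleC)
lemma scaleC_sum_right: "scaleC c (sum f S) = sum (\<lambda>i. scaleC c (f i)) S"
  by (induction S rule: infinite_finite_induct) (auto simp: scaleC_add_right)

lemma cinner_add_right: "cinner x (y + z) = cinner x y + cinner x z"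
  by (subst (1 2 3) cinner_commute) (simp add: cinner_add_left)
lemma cinner_scaleC_right: "cinner x (scaleC c y) = cnj c * cinner x y"
  by (subst (1 2) cinner_commute) (simp add: cinner_scaleC_left)
lemma cinner_zero_left[simp]: "cinner 0 y = 0"
proof -
  have "cinner (0 + 0) y = cinner 0 y + cinner 0 y" by (rule cinner_add_left)
  then show ?thesis by simp
qed
lemma cinner_zero_right[simp]: "cinner x 0 = 0"
  by (subst cinner_commute) simp
lemma cinner_minus_left: "cinner (- x) y = - cinner x y"
proof -
  have "cinner x y + cinner (- x) y = 0" by (simp flip: cinner_add_left)
  then show ?thesis by (rule minus_unique[symmetric])
qed
lemma cinner_minus_right: "cinner x (- y) = - cinner x y"
proof -
  have "cinner x y + cinner x (- y) = 0" by (simp flip: cinner_add_right)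
  then show ?thesis by (rule minus_unique[symmetric])
qed
lemma cinner_diff_left: "cinner (x - y) z = cinner x z - cinner y z"
  using cinner_add_left[of x "- y" z] by (simp add: cinner_minus_left)
lemma cinner_diff_right: "cinner x (y - z) = cinner x y - cinner x z"
  using cinner_add_right[of x y "- z"] by (simp add: cinner_minus_right)
lemma cinner_scaleR_left: "cinner (scaleR r x) y = of_real r * cinner x y"
  by (simp add: scaleR_scaleC cinner_scaleC_left)
lemma cinner_scaleR_right: "cinner x (scaleR r y) = of_real r * cinner x y"
  by (simp add: scaleR_scaleC cinner_scaleC_right)
lemma cinner_sum_left: "cinner (sum f S) y = sum (\<lambda>i. cinner (f i) y) S"
  by (induction S rule: infinite_finite_induct) (auto simp: cinner_add_left)
lemma cinner_sum_right: "cinner x (sum f S) = sum (\<lambda>i. cinner x (f i)) S"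
  by (induction S rule: infinite_finite_induct) (auto simp: cinner_add_right)
lemma Im_cinner_self[simp]: "Im (cinner x x) = 0"
proof -
  have "Im (cinner x x) = Im (cnj (cinner x x))" by (subst cinner_commute) simp
  then show ?thesis by simp
qed
lemma Re_cinner_self: "Re (cinner x x) = (norm x)^2"
  by (simp add: norm_eq_sqrt_cinner cinner_nonneg)
lemma cinner_self: "cinner x x = complex_of_real ((norm x)^2)"
  by (simp add: complex_eq_iff Re_cinner_self)

definition rin :: "'a::complex_inner \<Rightarrow> 'a \<Rightarrow> real" where "rin x y = Re (cinner x y)"

lemma rin_commute: "rin x y = rin y x"
  unfolding rin_def by (subst cinner_commute) simp
lemma rin_add_left: "rin (x + y) z = rin x z + rin y z"
  by (simp add: rin_def cinner_add_left)
lemma rin_add_right: "rin x (y + z) = rin x y + rin x z"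
  by (simp add: rin_def cinner_add_right)
lemma rin_diff_left: "rin (x - y) z = rin x z - rin y z"
  by (simp add: rin_def cinner_diff_left)
lemma rin_diff_right: "rin x (y - z) = rin x y - rin x z"
  by (simp add: rin_def cinner_diff_right)
lemma rin_minus_left: "rin (- x) y = - rin x y"
  by (simp add: rin_def cinner_minus_left)
lemma rin_minus_right: "rin x (- y) = - rin x y"
  by (simp add: rin_def cinner_minus_right)
lemma rin_scaleR_left: "rin (scaleR r x) y = r * rin x y"
  by (simp add: rin_def cinner_scaleR_left)
lemma rin_scaleR_right: "rin x (scaleR r y) = r * rin x y"
  by (simp add: rin_def cinner_scaleR_right)
lemma rin_self: "rin x x = (norm x)^2"
  by (simp add: rin_def Re_cinner_self)
lemma rin_zero_left[simp]: "rin 0 y = 0" by (simp add: rin_def)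
lemma rin_zero_right[simp]: "rin x 0 = 0" by (simp add: rin_def)

lemma norm_diff_sq: "(norm (x - y))^2 = (norm x)^2 - 2 * rin x y + (norm y)^2"
  by (simp add: rin_self[symmetric] rin_diff_left rin_diff_right rin_commute[of y x])
lemma norm_add_sq: "(norm (x + y))^2 = (norm x)^2 + 2 * rin x y + (norm y)^2"
  by (simp add: rin_self[symmetric] rin_add_left rin_add_right rin_commute[of y x])

lemma rin_cs: "rin x y \<le> norm x * norm y"
proof (cases "x = 0 \<or> y = 0")
  case True then show ?thesis by auto
next
  case False
  let ?a = "norm y" and ?b = "norm x"
  have ab: "?a > 0" "?b > 0" using False by auto
  have "0 \<le> (norm (scaleR ?a x - scaleR ?b y))^2" by simp
  also have "\<dots> = ?a^2 * ?b^2 - 2 * ?a * ?b * rin x y + ?b^2 * ?a^2"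
    by (simp add: norm_diff_sq rin_scaleR_left rin_scaleR_right power_mult_distrib)
  finally have "2 * ?a * ?b * rin x y \<le> 2 * ?a * ?b * (?b * ?a)"
    by (simp add: power2_eq_square algebra_simps)
  then show ?thesis using ab by (simp add: mult.commute)
qed

lemma rin_cs_abs: "\<bar>rin x y\<bar> \<le> norm x * norm y"
  using rin_cs[of x y] rin_cs[of "-x" y] by (simp add: rin_minus_left)

lemma norm_scaleC: "norm (scaleC c (x::'a::complex_inner)) = cmod c * norm x"
proof -
  have "(norm (scaleC c x))^2 = Re (c * cnj c * cinner x x)"
    by (simp add: Re_cinner_self[symmetric] cinner_scaleC_left cinner_scaleC_right mult.assoc)
  also have "\<dots> = (cmod c * norm x)^2"
    by (simp add: cinner_self complex_mult_cnj power_mult_distrib cmod_power2)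
  finally show ?thesis
    by (metis abs_of_nonneg norm_ge_zero real_sqrt_abs zero_le_mult_iff)
qed

lemma cinner_cs: "cmod (cinner x y) \<le> norm x * norm y"
proof -
  let ?c = "cinner x y"
  have "rin (scaleC (cnj ?c) x) y = (cmod ?c)^2"
    using cmod_power2[of ?c] by (simp add: rin_def cinner_scaleC_left power2_eq_square)
  also have "\<dots> = cmod ?c * cmod ?c" by (simp add: power2_eq_square)
  finally have "cmod ?c * cmod ?c \<le> cmod ?c * (norm x * norm y)"
    using rin_cs[of "scaleC (cnj ?c) x" y] by (simp add: norm_scaleC mult.assoc)
  then show ?thesis
    by (metis mult_le_cancel_left_pos norm_ge_zero order.order_iff_strict mult_nonneg_nonneg norm_ge_zero)
qed

lemma cinner_eq_rin: "cinner x y = Complex (rin x y) (- rin (scaleC \<i> x) y)"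
  by (simp add: rin_def complex_eq_iff cinner_scaleC_left)

lemma bcl_bl: "bounded_clinear A \<Longrightarrow> bounded_linear A"
  by (simp add: bounded_clinear_def)
lemma bcl_add: "bounded_clinear A \<Longrightarrow> A (x + y) = A x + A y"
  using bcl_bl linear_add bounded_linear.linear by blast
lemma bcl_scaleC: "bounded_clinear A \<Longrightarrow> A (scaleC c x) = scaleC c (A x)"
  by (simp add: bounded_clinear_def)
lemma bcl_scaleR: "bounded_clinear A \<Longrightarrow> A (scaleR r x) = scaleR r (A x)"
  by (simp add: scaleR_scaleC bcl_scaleC)
lemma bcl_zero: "bounded_clinear A \<Longrightarrow> A 0 = 0"
  using bcl_bl linear_0 bounded_linear.linear by blast
lemma bcl_minus: "bounded_clinear A \<Longrightarrow> A (- x) = - A x"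
  using bcl_bl linear_neg bounded_linear.linear by blast
lemma bcl_diff: "bounded_clinear A \<Longrightarrow> A (x - y) = A x - A y"
  using bcl_bl linear_diff bounded_linear.linear by blast
lemma bcl_sum: "bounded_clinear A \<Longrightarrow> A (sum f S) = sum (\<lambda>i. A (f i)) S"
  using bcl_bl linear_sum bounded_linear.linear by blast
lemma bcl_norm: "bounded_clinear A \<Longrightarrow> norm (A x) \<le> onorm A * norm x"
  using bcl_bl onorm by blast
lemma bcl_onorm_nonneg: "bounded_clinear A \<Longrightarrow> 0 \<le> onorm A"
  using bcl_bl onorm_pos_le by blast

lemma bcl_intro:
  assumes "\<And>x y. f (x + y) = f x + f y" "\<And>c x. f (scaleC c x) = scaleC c (f x)"
    "\<And>x. norm (f x) \<le> norm x * K"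
  shows "bounded_clinear f"
  unfolding bounded_clinear_def using assms
  by (auto intro!: bounded_linear_intro[where K=K] simp: scaleR_scaleC)

lemma bcl_id: "bounded_clinear (\<lambda>x. x)"
  by (rule bcl_intro[where K=1]) auto
lemma bcl_scale_id: "bounded_clinear (\<lambda>x. scaleC c x)"
  by (rule bcl_intro[where K="cmod c"]) (auto simp: scaleC_add_right scaleC_scaleC mult.commute norm_scaleC)
lemma bcl_compose: "bounded_clinear A \<Longrightarrow> bounded_clinear B \<Longrightarrow> bounded_clinear (\<lambda>x. A (B x))"
  unfolding bounded_clinear_def by (auto intro: bounded_linear_compose)
lemma bcl_add_op: "bounded_clinear A \<Longrightarrow> bounded_clinear B \<Longrightarrow> bounded_clinear (\<lambda>x. A x + B x)"
  unfolding bounded_clinear_def by (auto intro: bounded_linear_add simp: scaleC_add_right)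
lemma bcl_diff_op: "bounded_clinear A \<Longrightarrow> bounded_clinear B \<Longrightarrow> bounded_clinear (\<lambda>x. A x - B x)"
  unfolding bounded_clinear_def by (auto intro: bounded_linear_sub simp: scaleC_diff_right)
lemma bcl_scale_op: "bounded_clinear A \<Longrightarrow> bounded_clinear (\<lambda>x. scaleC c (A x))"
  using bcl_compose[OF bcl_scale_id, of A c] by simp

lemma adj_sym: "is_adjoint A B \<Longrightarrow> cinner (B x) y = cinner x (A y)"
  unfolding is_adjoint_def by (metis cinner_commute)

lemma normal_norm_eq:
  assumes "is_adjoint A B" "\<And>x. A (B x) = B (A x)"
  shows "norm (A x) = norm (B x)"
proof -
  have "(norm (A x))^2 = Re (cinner x (B (A x)))"
    using assms(1) by (simp add: is_adjoint_def Re_cinner_self[symmetric])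
  also have "\<dots> = Re (cinner x (A (B x)))" using assms(2) by simp
  also have "\<dots> = (norm (B x))^2"
    using adj_sym[OF assms(1), of x "B x"] by (simp add: Re_cinner_self[symmetric])
  finally show ?thesis by (simp add: power2_eq_iff_nonneg)
qed

lemma adj_shift:
  assumes "bounded_clinear A" "bounded_clinear B" "is_adjoint A B"
  shows "is_adjoint (\<lambda>x. A x - scaleC m x) (\<lambda>x. B x - scaleC (cnj m) x)"
  using assms(3) unfolding is_adjoint_def
  by (simp add: cinner_diff_left cinner_diff_right cinner_scaleC_left cinner_scaleC_right)

lemma comm_shift:
  assumes "bounded_clinear A" "bounded_clinear B" "\<And>x. A (B x) = B (A x)"
  shows "(\<lambda>x. A x - scaleC m x) ((\<lambda>x. B x - scaleC n x) x) = (\<lambda>x. B x - scaleC n x) ((\<lambda>x. A x - scaleC m x) x)"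
  using assms by (simp add: bcl_diff bcl_scaleC scaleC_diff_right scaleC_scaleC mult.commute algebra_simps)

lemma invert_normal:
  fixes N :: "'a::chilbert_space \<Rightarrow> 'a"
  assumes N: "bounded_clinear N" and N': "bounded_clinear N'" and adj: "is_adjoint N N'"
    and comm: "\<And>x. N (N' x) = N' (N x)"
    and c: "c > 0" and below: "\<And>x. c * norm x \<le> norm (N x)"
  shows "\<exists>G. bounded_clinear G \<and> (\<forall>x. G (N x) = x) \<and> (\<forall>x. N (G x) = x)"
proof -
  have inj: "inj N"
  proof (rule injI)
    fix x y assume "N x = N y"
    then have "N (x - y) = 0" using bcl_diff[OF N] by simp
    then have "c * norm (x - y) \<le> 0" using below[of "x - y"] by simp
    then show "x = y" using c by (simp add: mult_le_0_iff)
  qed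
  define K where "K = (onorm N)^2 + c^2"
  have Kpos: "K > 0" "c^2 \<le> K" unfolding K_def using c by (auto intro!: add_nonneg_pos)
  define s where "s = 1 / K"
  define Q where "Q = (\<lambda>x. x - scaleR s (N' (N x)))"
  define q where "q = sqrt (1 - c^2 / K)"
  have q: "0 \<le> q" "q < 1"
    unfolding q_def using Kpos c by (auto simp: field_simps)
  have Qb: "norm (Q x) \<le> q * norm x" for x
  proof -
    have r: "rin x (N' (N x)) = (norm (N x))^2"
      using adj unfolding is_adjoint_def rin_def
      by (metis Re_cinner_self)
    have n: "norm (N' (N x)) \<le> onorm N * norm (N x)"
      using normal_norm_eq[OF adj comm, of "N x"] bcl_norm[OF N, of "N x"] by simp
    have n2: "(norm (N' (N x)))^2 \<le> K * (norm (N x))^2"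
    proof -
      have "(norm (N' (N x)))^2 \<le> (onorm N * norm (N x))^2"
        using n by (simp add: power_mono)
      also have "\<dots> \<le> K * (norm (N x))^2"
        unfolding K_def by (simp add: power_mult_distrib algebra_simps)
      finally show ?thesis .
    qed
    have "(norm (Q x))^2 = (norm x)^2 - 2 * s * (norm (N x))^2 + s^2 * (norm (N' (N x)))^2"
      unfolding Q_def by (simp add: norm_diff_sq rin_scaleR_right r power_mult_distrib)
    also have "\<dots> \<le> (norm x)^2 - 2 * s * (norm (N x))^2 + s^2 * (K * (norm (N x))^2)"
      using n2 by (simp add: mult_left_mono)
    also have "\<dots> = (norm x)^2 - (norm (N x))^2 / K"
      unfolding s_def using Kpos by (simp add: field_simps power2_eq_square)
    also have "\<dots> \<le> (norm x)^2 - c^2 * (norm x)^2 / K"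
    proof -
      have "(c * norm x)^2 \<le> (norm (N x))^2" using below[of x] c by (simp add: power_mono)
      then show ?thesis using Kpos by (simp add: divide_right_mono power_mult_distrib)
    qed
    also have "\<dots> = (q * norm x)^2"
      unfolding q_def using Kpos by (simp add: power_mult_distrib field_simps)
    finally show ?thesis
      using q by (meson mult_nonneg_nonneg norm_ge_zero power2_le_imp_le)
  qed
  have Qlin: "Q x - Q y = Q (x - y)" for x y
    unfolding Q_def using N N' by (simp add: bcl_diff scaleR_diff_right algebra_simps)
  have surj: "\<exists>x. N x = z" for z
  proof -
    define F where "F = (\<lambda>y. Q y + scaleR s z)"
    have "\<exists>!y. F y = y"
    proof (rule banach_fix_type[OF q])
      show "\<forall>x y. dist (F x) (F y) \<le> q * dist x y"
        unfolding F_def dist_norm by (simp add: Qlin Qb)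
    qed
    then obtain y where "F y = y" by blast
    then have "scaleR s (N' (N y)) = scaleR s z" unfolding F_def Q_def
      by (metis add_diff_cancel_left' diff_add_cancel diff_diff_eq2)
    moreover have "s \<noteq> 0" unfolding s_def using Kpos by simp
    ultimately have "N' (N y) = z" by simp
    then have "N (N' y) = z" using comm by simp
    then show ?thesis by blast
  qed
  then have surjN: "surj N" by (metis surjI)
  define G where "G = inv N"
  have G1: "G (N x) = x" for x unfolding G_def using inj by (simp add: inv_f_f)
  have G2: "N (G x) = x" for x unfolding G_def using surjN by (simp add: surj_f_inv_f)
  have "bounded_clinear G"
  proof (rule bcl_intro[where K="1/c"])
    fix x y show "G (x + y) = G x + G y"
      by (metis G1 G2 bcl_add[OF N])
  next
    fix a x show "G (scaleC a x) = scaleC a (G x)"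
      by (metis G1 G2 bcl_scaleC[OF N])
  next
    fix x
    have "c * norm (G x) \<le> norm x" using below[of "G x"] G2 by simp
    then show "norm (G x) \<le> norm x * (1 / c)" using c by (simp add: field_simps)
  qed
  then show ?thesis using G1 G2 by blast
qed

definition approx_ev :: "('a::complex_inner \<Rightarrow> 'a) \<Rightarrow> complex \<Rightarrow> bool" where
  "approx_ev A m \<longleftrightarrow> (\<forall>e>0. \<exists>x. norm x = 1 \<and> norm (A x - scaleC m x) < e)"

lemma approx_ev_spectrum:
  assumes "approx_ev A m"
  shows "m \<in> op_spectrum A"
proof (rule ccontr)
  assume "m \<notin> op_spectrum A"
  then obtain G where G: "bounded_clinear G" "\<And>x. G (A x - scaleC m x) = x"
    unfolding op_spectrum_def by blast
  define e where "e = 1 / (onorm G + 1)"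
  have e: "e > 0" unfolding e_def using bcl_onorm_nonneg[OF G(1)] by simp
  then obtain x where x: "norm x = 1" "norm (A x - scaleC m x) < e"
    using assms unfolding approx_ev_def by blast
  have "1 = norm (G (A x - scaleC m x))" using G(2) x(1) by simp
  also have "\<dots> \<le> onorm G * norm (A x - scaleC m x)" by (rule bcl_norm[OF G(1)])
  also have "\<dots> \<le> onorm G * e"
    using x(2) bcl_onorm_nonneg[OF G(1)] by (simp add: mult_left_mono)
  also have "\<dots> < 1" unfolding e_def using bcl_onorm_nonneg[OF G(1)] by (simp add: field_simps)
  finally show False by simp
qed

lemma normal_opE:
  assumes "normal_op A"
  obtains B where "bounded_clinear A" "bounded_clinear B" "is_adjoint A B" "\<And>x. A (B x) = B (A x)"
  using assms unfolding normal_op_def by blast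

lemma spectrum_approx_ev:
  fixes A :: "'a::chilbert_space \<Rightarrow> 'a"
  assumes "normal_op A" and "m \<in> op_spectrum A"
  shows "approx_ev A m"
proof (rule ccontr)
  obtain B where AB: "bounded_clinear A" "bounded_clinear B" "is_adjoint A B" "\<And>x. A (B x) = B (A x)"
    using assms(1) unfolding normal_op_def by blast
  define N where "N = (\<lambda>x. A x - scaleC m x)"
  define N' where "N' = (\<lambda>x. B x - scaleC (cnj m) x)"
  have N: "bounded_clinear N" unfolding N_def by (rule bcl_diff_op[OF AB(1) bcl_scale_id])
  have N': "bounded_clinear N'" unfolding N'_def by (rule bcl_diff_op[OF AB(2) bcl_scale_id])
  have adj: "is_adjoint N N'" unfolding N_def N'_def by (rule adj_shift[OF AB(1-3)])
  have comm: "N (N' x) = N' (N x)" for x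
    unfolding N_def N'_def using comm_shift[OF AB(1,2), where m=m and n="cnj m" and x=x] AB(4) by simp
  assume "\<not> approx_ev A m"
  then obtain e where e: "e > 0" "\<And>x. norm x = 1 \<Longrightarrow> e \<le> norm (N x)"
    unfolding approx_ev_def N_def by (auto simp: not_less)
  have below: "e * norm x \<le> norm (N x)" for x
  proof (cases "x = 0")
    case True then show ?thesis by (simp add: bcl_zero[OF N])
  next
    case False
    have "e \<le> norm (N (scaleR (1 / norm x) x))" using e(2) False by simp
    also have "\<dots> = norm (N x) / norm x" using False by (simp add: bcl_scaleR[OF N])
    finally show ?thesis using False by (simp add: field_simps)
  qed
  obtain G where G: "bounded_clinear G" "\<forall>x. G (N x) = x" "\<forall>x. N (G x) = x"
    using invert_normal[OF N N' adj comm e(1) below] by blast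
  have "m \<notin> op_spectrum A"
    unfolding op_spectrum_def using G unfolding N_def by auto
  then show False using assms(2) by simp
qed

lemma tendsto_bound_seq:
  fixes f :: "nat \<Rightarrow> 'b::real_normed_vector"
  assumes "\<And>n. norm (f n - l) \<le> inverse (real (Suc n))"
  shows "f \<longlonglongrightarrow> l"
proof -
  have "(\<lambda>n. f n - l) \<longlonglongrightarrow> 0"
    by (rule Lim_null_comparison[OF _ LIMSEQ_inverse_real_of_nat]) (use assms in auto)
  then show ?thesis by (simp add: LIM_zero_iff)
qed

lemma W0_intro:
  fixes A :: "'a::complex_inner \<Rightarrow> 'a"
  assumes A: "bounded_clinear A" and ne: "\<exists>x::'a. x \<noteq> 0"
    and H: "\<And>e. e > 0 \<Longrightarrow> \<exists>y. \<bar>(norm y)^2 - 1\<bar> \<le> e \<and> \<bar>(norm (A y))^2 - (onorm A)^2\<bar> \<le> e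
              \<and> cmod (cinner (A y) y - l) \<le> e"
  shows "l \<in> max_numerical_range A"
proof -
  have "\<forall>n. \<exists>y. \<bar>(norm y)^2 - 1\<bar> \<le> inverse (real (Suc n)) \<and>
      \<bar>(norm (A y))^2 - (onorm A)^2\<bar> \<le> inverse (real (Suc n)) \<and>
      cmod (cinner (A y) y - l) \<le> inverse (real (Suc n))"
    using H by simp
  then obtain y where y: "\<And>n. \<bar>(norm (y n))^2 - 1\<bar> \<le> inverse (real (Suc n))"
    "\<And>n. \<bar>(norm (A (y n)))^2 - (onorm A)^2\<bar> \<le> inverse (real (Suc n))"
    "\<And>n. cmod (cinner (A (y n)) (y n) - l) \<le> inverse (real (Suc n))"
    by metis
  have l1: "(\<lambda>n. (norm (y n))^2) \<longlonglongrightarrow> 1" by (rule tendsto_bound_seq) (use y(1) in auto)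
  have l2: "(\<lambda>n. (norm (A (y n)))^2) \<longlonglongrightarrow> (onorm A)^2" by (rule tendsto_bound_seq) (use y(2) in auto)
  have l3: "(\<lambda>n. cinner (A (y n)) (y n)) \<longlonglongrightarrow> l" by (rule tendsto_bound_seq) (use y(3) in auto)
  have n1: "(\<lambda>n. norm (y n)) \<longlonglongrightarrow> 1"
    using tendsto_real_sqrt[OF l1] by simp
  have n2: "(\<lambda>n. norm (A (y n))) \<longlonglongrightarrow> onorm A"
    using tendsto_real_sqrt[OF l2] bcl_onorm_nonneg[OF A] by simp
  obtain x0 :: 'a where "x0 \<noteq> 0" using ne by blast
  define e0 where "e0 = scaleR (1 / norm x0) x0"
  have e0: "norm e0 = 1" unfolding e0_def using \<open>x0 \<noteq> 0\<close> by simp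
  define z where "z n = (if y n = 0 then e0 else scaleR (1 / norm (y n)) (y n))" for n
  have zn: "norm (z n) = 1" for n unfolding z_def using e0 by simp
  have ev: "eventually (\<lambda>n. y n \<noteq> 0) sequentially"
  proof -
    have "eventually (\<lambda>n. 1/2 < norm (y n)) sequentially"
      using order_tendstoD(1)[OF n1, of "1/2"] by simp
    then show ?thesis by (rule eventually_mono) auto
  qed
  have "(\<lambda>n. norm (A (y n)) / norm (y n)) \<longlonglongrightarrow> onorm A / 1"
    by (rule tendsto_divide[OF n2 n1]) simp
  then have t1': "(\<lambda>n. norm (A (y n)) / norm (y n)) \<longlonglongrightarrow> onorm A" by simp
  have t1: "(\<lambda>n. norm (A (z n))) \<longlonglongrightarrow> onorm A"
    apply (rule Lim_transform_eventually[OF t1'])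
    apply (rule eventually_mono[OF ev])
    by (simp add: z_def bcl_scaleR[OF A])
  have "(\<lambda>n. cinner (A (y n)) (y n) / complex_of_real ((norm (y n))^2)) \<longlonglongrightarrow> l / complex_of_real 1"
    by (rule tendsto_divide[OF l3 tendsto_of_real[OF l1]]) simp
  then have t2': "(\<lambda>n. cinner (A (y n)) (y n) / complex_of_real ((norm (y n))^2)) \<longlonglongrightarrow> l" by simp
  have t2: "(\<lambda>n. cinner (A (z n)) (z n)) \<longlonglongrightarrow> l"
    apply (rule Lim_transform_eventually[OF t2'])
    apply (rule eventually_mono[OF ev])
    by (simp add: z_def bcl_scaleR[OF A] cinner_scaleR_left cinner_scaleR_right power2_eq_square field_simps)
  show ?thesis unfolding max_numerical_range_def using zn t1 t2 by blast
qed

lemma W0_E: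
  fixes A :: "'a::complex_inner \<Rightarrow> 'a"
  assumes "l \<in> max_numerical_range A" "e > 0"
  shows "\<exists>x. norm x = 1 \<and> \<bar>norm (A x) - onorm A\<bar> < e \<and> cmod (cinner (A x) x - l) < e"
proof -
  obtain x where x: "\<And>n. norm (x n) = 1" "(\<lambda>n. norm (A (x n))) \<longlonglongrightarrow> onorm A"
    "(\<lambda>n. cinner (A (x n)) (x n)) \<longlonglongrightarrow> l"
    using assms(1) unfolding max_numerical_range_def by blast
  have "eventually (\<lambda>n. dist (norm (A (x n))) (onorm A) < e) sequentially"
    using x(2) assms(2) by (simp add: tendsto_iff)
  moreover have "eventually (\<lambda>n. dist (cinner (A (x n)) (x n)) l < e) sequentially"
    using x(3) assms(2) by (simp add: tendsto_iff)
  ultimately have "eventually (\<lambda>n. dist (norm (A (x n))) (onorm A) < e \<and> dist (cinner (A (x n)) (x n)) l < e) sequentially"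
    by (rule eventually_conj)
  then obtain n where "dist (norm (A (x n))) (onorm A) < e" "dist (cinner (A (x n)) (x n)) l < e"
    using eventually_sequentially by auto
  then show ?thesis using x(1) by (auto simp: dist_norm)
qed

lemma finite_min_dist:
  fixes s :: "complex set"
  assumes "finite s"
  shows "\<exists>d>0. \<forall>v\<in>s. \<forall>w\<in>s. v \<noteq> w \<longrightarrow> d \<le> cmod (v - w)"
proof -
  define D where "D = (\<lambda>(v,w). cmod (v - w)) ` {p \<in> s \<times> s. fst p \<noteq> snd p}"
  have fD: "finite D" unfolding D_def using assms by auto
  have pos: "\<forall>x\<in>D. x > 0" unfolding D_def by auto
  define d where "d = Min (insert 1 D)"
  have "d > 0" unfolding d_def using fD pos by (simp add: Min_gr_iff)
  moreover have "\<forall>v\<in>s. \<forall>w\<in>s. v \<noteq> w \<longrightarrow> d \<le> cmod (v - w)"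
  proof (intro ballI impI)
    fix v w assume "v \<in> s" "w \<in> s" "v \<noteq> w"
    then have "cmod (v - w) \<in> D" unfolding D_def by force
    then show "d \<le> cmod (v - w)" unfolding d_def using fD by simp
  qed
  ultimately show ?thesis by blast
qed

lemma gram:
  fixes G :: "'i \<Rightarrow> 'i \<Rightarrow> complex"
  assumes fin: "finite s" and a: "\<And>v. v \<in> s \<Longrightarrow> 0 \<le> a v \<and> a v \<le> 1"
    and G: "\<And>v w. v \<in> s \<Longrightarrow> w \<in> s \<Longrightarrow> cmod (G v w - (if v = w then D v else 0)) \<le> eta"
  shows "cmod ((\<Sum>v\<in>s. \<Sum>w\<in>s. of_real (a v * a w) * G v w) - (\<Sum>v\<in>s. of_real ((a v)^2) * D v))
          \<le> real (card s)^2 * eta"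
proof -
  have diag: "(\<Sum>w\<in>s. of_real (a v * a w) * (if v = w then D v else 0)) = of_real ((a v)^2) * D v"
    if "v \<in> s" for v
  proof -
    have "(\<Sum>w\<in>s. of_real (a v * a w) * (if v = w then D v else 0))
        = (\<Sum>w\<in>s. if w = v then of_real (a v * a v) * D v else 0)"
      by (rule sum.cong) auto
    also have "\<dots> = of_real ((a v)^2) * D v" using fin that by (simp add: power2_eq_square)
    finally show ?thesis .
  qed
  have E: "(\<Sum>v\<in>s. of_real ((a v)^2) * D v) = (\<Sum>v\<in>s. \<Sum>w\<in>s. of_real (a v * a w) * (if v = w then D v else 0))"
    by (rule sum.cong[OF refl], rule diag[symmetric])
  have "(\<Sum>v\<in>s. \<Sum>w\<in>s. of_real (a v * a w) * G v w) - (\<Sum>v\<in>s. of_real ((a v)^2) * D v)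
      = (\<Sum>v\<in>s. \<Sum>w\<in>s. of_real (a v * a w) * (G v w - (if v = w then D v else 0)))"
    unfolding E by (simp only: sum_subtractf[symmetric] right_diff_distrib)
  also have "cmod \<dots> \<le> (\<Sum>v\<in>s. \<Sum>w\<in>s. eta)"
  proof (rule sum_norm_le, rule sum_norm_le)
    fix v w assume vw: "v \<in> s" "w \<in> s"
    have "cmod (of_real (a v * a w) * (G v w - (if v = w then D v else 0)))
        = \<bar>a v * a w\<bar> * cmod (G v w - (if v = w then D v else 0))" by (simp add: norm_mult abs_mult)
    also have "\<dots> \<le> 1 * eta"
    proof (rule mult_mono)
      show "\<bar>a v * a w\<bar> \<le> 1" using a[OF vw(1)] a[OF vw(2)]
        by (simp add: abs_mult mult_le_one)
    qed (use G[OF vw] in auto)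
    finally show "cmod (of_real (a v * a w) * (G v w - (if v = w then D v else 0))) \<le> eta" by simp
  qed
  also have "\<dots> = real (card s)^2 * eta" by (simp add: power2_eq_square)
  finally show ?thesis .
qed

lemma cinner_sum_expand:
  "cinner (\<Sum>v\<in>s. scaleR (a v) (f v)) (\<Sum>w\<in>s. scaleR (a w) (g w))
   = (\<Sum>v\<in>s. \<Sum>w\<in>s. of_real (a v * a w) * cinner (f v) (g w))"
  apply (simp add: cinner_sum_left cinner_sum_right cinner_scaleR_left cinner_scaleR_right
      sum_distrib_left mult.assoc)
  apply (subst sum.swap)
  apply (simp add: mult.left_commute)
  done

lemma diag_bounds:
  fixes A :: "'a::complex_inner \<Rightarrow> 'a"
  assumes nx: "norm x = 1" and ax: "norm (A x - scaleC v x) \<le> d"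
    and v: "cmod v = M" and bnd: "\<And>z. norm (A z) \<le> M * norm z" and A: "bounded_clinear A"
  shows "cmod (cinner x x - 1) = 0" "cmod (cinner (A x) x - v) \<le> d"
    "cmod (cinner (A x) (A x) - of_real (M^2)) \<le> 2 * M * d"
proof -
  show "cmod (cinner x x - 1) = 0" using nx by (simp add: cinner_self)
  have "cinner (A x) x - v = cinner (A x - scaleC v x) x"
    using nx by (simp add: cinner_diff_left cinner_scaleC_left cinner_self)
  also have "cmod \<dots> \<le> norm (A x - scaleC v x) * norm x" by (rule cinner_cs)
  finally show "cmod (cinner (A x) x - v) \<le> d" using nx ax by simp
  have M0: "0 \<le> M" using v by auto
  have le: "norm (A x) \<le> M" using bnd[of x] nx by simp
  have "\<bar>norm (A x) - cmod v\<bar> \<le> norm (A x - scaleC v x)"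
    using norm_triangle_ineq3[of "A x" "scaleC v x"] nx by (simp add: norm_scaleC)
  then have dd: "\<bar>norm (A x) - M\<bar> \<le> d" using ax v by simp
  have "cmod (cinner (A x) (A x) - of_real (M^2)) = \<bar>(norm (A x))^2 - M^2\<bar>"
    by (simp only: cinner_self of_real_diff[symmetric] norm_of_real)
  also have "\<dots> = \<bar>(norm (A x) - M) * (norm (A x) + M)\<bar>"
    by (simp add: power2_eq_square algebra_simps)
  also have "\<dots> = \<bar>norm (A x) - M\<bar> * (norm (A x) + M)"
    using M0 by (simp add: abs_mult)
  also have "\<dots> \<le> d * (2 * M)"
    using dd le M0 by (intro mult_mono) auto
  finally show "cmod (cinner (A x) (A x) - of_real (M^2)) \<le> 2 * M * d" by (simp add: mult_ac)
qed

lemma off_bounds: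
  fixes A :: "'a::complex_inner \<Rightarrow> 'a"
  assumes A: "bounded_clinear A" and adj: "is_adjoint A B"
    and nx: "norm x = 1" and ny: "norm y = 1"
    and ax: "norm (A x - scaleC v x) \<le> t" and ay: "norm (A y - scaleC w y) \<le> t"
    and bY: "norm (B y - scaleC (cnj w) y) \<le> t"
    and v: "cmod v = M" and w: "cmod w = M" and bnd: "\<And>z. norm (A z) \<le> M * norm z"
    and d: "d > 0" "d \<le> cmod (v - w)"
  shows "cmod (cinner x y) \<le> 2 * t / d"
    "cmod (cinner (A x) y) \<le> t + M * (2 * t / d)"
    "cmod (cinner (A x) (A y)) \<le> M * t + M * (t + M * (2 * t / d))"
proof -
  let ?c = "cinner x y"
  have M0: "0 \<le> M" using v by auto
  have e1: "cinner (A x) y = cinner (A x - scaleC v x) y + v * ?c"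
    by (simp add: cinner_diff_left cinner_scaleC_left)
  have e2: "cinner (A x) y = cinner x (B y - scaleC (cnj w) y) + w * ?c"
    using adj by (simp add: is_adjoint_def cinner_diff_right cinner_scaleC_right)
  have "(v - w) * ?c = cinner x (B y - scaleC (cnj w) y) - cinner (A x - scaleC v x) y"
    using e1 e2 by (simp add: algebra_simps)
  then have "cmod ((v - w) * ?c) \<le> cmod (cinner x (B y - scaleC (cnj w) y)) + cmod (cinner (A x - scaleC v x) y)"
    by (metis norm_triangle_ineq4)
  also have "\<dots> \<le> t + t"
  proof (rule add_mono)
    show "cmod (cinner x (B y - scaleC (cnj w) y)) \<le> t"
      by (rule order_trans[OF cinner_cs]) (simp add: nx bY)
    show "cmod (cinner (A x - scaleC v x) y) \<le> t"
      by (rule order_trans[OF cinner_cs]) (simp add: ny ax)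
  qed
  finally have "cmod (v - w) * cmod ?c \<le> 2 * t" by (simp add: norm_mult)
  moreover have "d * cmod ?c \<le> cmod (v - w) * cmod ?c" using d by (simp add: mult_right_mono)
  ultimately have "d * cmod ?c \<le> 2 * t" by linarith
  then show c: "cmod ?c \<le> 2 * t / d" using d by (simp add: field_simps)
  have "cmod (cinner (A x) y) \<le> cmod (cinner (A x - scaleC v x) y) + cmod (v * ?c)"
    using e1 norm_triangle_ineq by metis
  also have "\<dots> \<le> t + M * (2 * t / d)"
  proof (rule add_mono)
    show "cmod (cinner (A x - scaleC v x) y) \<le> t"
      by (rule order_trans[OF cinner_cs]) (simp add: ny ax)
    have "cmod (v * ?c) = M * cmod ?c" using v by (simp add: norm_mult)
    also have "\<dots> \<le> M * (2 * t / d)" using c M0 by (rule mult_left_mono)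
    finally show "cmod (v * ?c) \<le> M * (2 * t / d)" .
  qed
  finally show c2: "cmod (cinner (A x) y) \<le> t + M * (2 * t / d)" .
  have e3: "cinner (A x) (A y) = cinner (A x) (A y - scaleC w y) + cnj w * cinner (A x) y"
    by (simp add: cinner_diff_right cinner_scaleC_right)
  have "cmod (cinner (A x) (A y)) \<le> cmod (cinner (A x) (A y - scaleC w y)) + cmod (cnj w * cinner (A x) y)"
    using e3 norm_triangle_ineq by metis
  also have "\<dots> \<le> M * t + M * (t + M * (2 * t / d))"
  proof (rule add_mono)
    have "cmod (cinner (A x) (A y - scaleC w y)) \<le> norm (A x) * norm (A y - scaleC w y)" by (rule cinner_cs)
    also have "\<dots> \<le> M * t" using bnd[of x] nx ay M0 by (intro mult_mono) auto
    finally show "cmod (cinner (A x) (A y - scaleC w y)) \<le> M * t" .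
    have "cmod (cnj w * cinner (A x) y) = M * cmod (cinner (A x) y)" using w by (simp add: norm_mult)
    also have "\<dots> \<le> M * (t + M * (2 * t / d))" using c2 M0 by (rule mult_left_mono)
    finally show "cmod (cnj w * cinner (A x) y) \<le> M * (t + M * (2 * t / d))" .
  qed
  finally show "cmod (cinner (A x) (A y)) \<le> M * t + M * (t + M * (2 * t / d))" .
qed

lemma Cbound:
  fixes M d t :: real
  assumes M: "0 \<le> M" and d: "0 < d" and t: "0 \<le> t"
  defines "C' \<equiv> (1 + M)^2 * (2 + 2 / d)"
  shows "2*t/d \<le> t*C'" "t + M*(2*t/d) \<le> t*C'" "M*t + M*(t + M*(2*t/d)) \<le> t*C'"
    "t \<le> t*C'" "2*M*t \<le> t*C'" "0 \<le> t*C'"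
proof -
  define r where "r = 1 / d"
  have r: "0 \<le> r" unfolding r_def using d by simp
  have eq: "t*C' = 2*t + 2*(t*r) + 4*(M*t) + 4*(M*(t*r)) + 2*(M^2*t) + 2*(M^2*(t*r))"
    using d unfolding C'_def r_def by (simp add: power2_eq_square field_simps)
  have dr: "2*t/d = 2*(t*r)" unfolding r_def by simp
  have p1: "0 \<le> t*r" using t r by simp
  have p2: "0 \<le> M*t" using t M by simp
  have p3: "0 \<le> M*(t*r)" using p1 M by simp
  have p4: "0 \<le> M^2*t" using t by simp
  have p5: "0 \<le> M^2*(t*r)" using p1 by simp
  have e3: "M*t + M*(t + M*(2*t/d)) = 2*(M*t) + 2*(M^2*(t*r))"
    unfolding dr by (simp add: power2_eq_square algebra_simps)
  have e2: "t + M*(2*t/d) = t + 2*(M*(t*r))" unfolding dr by (simp add: algebra_simps)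
  show "2*t/d \<le> t*C'" unfolding eq dr using p1 p2 p3 p4 p5 t by linarith
  show "t + M*(2*t/d) \<le> t*C'" unfolding eq e2 using p1 p2 p3 p4 p5 t by linarith
  show "M*t + M*(t + M*(2*t/d)) \<le> t*C'" unfolding eq e3 using p1 p2 p3 p4 p5 t by linarith
  show "t \<le> t*C'" unfolding eq using p1 p2 p3 p4 p5 t by linarith
  show "2*M*t \<le> t*C'" unfolding eq using p1 p2 p3 p4 p5 t by linarith
  show "0 \<le> t*C'" unfolding eq using p1 p2 p3 p4 p5 t by linarith
qed

theorem hull_subset_W0:
  fixes A :: "'a::chilbert_space \<Rightarrow> 'a"
  assumes ne: "\<exists>x::'a. x \<noteq> 0" and nA: "normal_op A"
  shows "convex hull (op_spectrum A \<inter> {z. cmod z = onorm A}) \<subseteq> max_numerical_range A"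
proof
  fix l assume "l \<in> convex hull (op_spectrum A \<inter> {z. cmod z = onorm A})"
  then obtain s u where s: "finite s" "s \<subseteq> op_spectrum A \<inter> {z. cmod z = onorm A}"
    and u: "\<forall>x\<in>s. 0 \<le> u x" "sum u s = 1" "(\<Sum>v\<in>s. u v *\<^sub>R v) = l"
    unfolding convex_hull_explicit by blast
  obtain B where AB: "bounded_clinear A" "bounded_clinear B" "is_adjoint A B" "\<And>x. A (B x) = B (A x)"
    using nA unfolding normal_op_def by blast
  define M where "M = onorm A"
  have M0: "0 \<le> M" unfolding M_def using bcl_onorm_nonneg[OF AB(1)] .
  have bnd: "\<And>z. norm (A z) \<le> M * norm z" unfolding M_def using bcl_norm[OF AB(1)] .
  obtain d where d: "d > 0" "\<forall>v\<in>s. \<forall>w\<in>s. v \<noteq> w \<longrightarrow> d \<le> cmod (v - w)"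
    using finite_min_dist[OF s(1)] by blast
  have sv: "v \<in> op_spectrum A" "cmod v = M" if "v \<in> s" for v using s(2) that M_def by auto
  have ub: "u v \<le> 1" if "v \<in> s" for v
    using member_le_sum[of v s u] that u s(1) by auto
  define C where "C = (1 + M)^2 * (2 + 2 / d)"
  show "l \<in> max_numerical_range A"
  proof (rule W0_intro[OF AB(1) ne])
    fix e :: real assume e: "e > 0"
    have C0: "C > 0" unfolding C_def using d M0 by (simp add: add_pos_nonneg)
    define t where "t = e / (real (card s)^2 * C + 1)"
    have den: "real (card s)^2 * C + 1 > 0" using C0 by (simp add: add_nonneg_pos)
    have t0: "t > 0" unfolding t_def using e den by simp
    have tC: "real (card s)^2 * (t * C) \<le> e"
    proof -
      have "real (card s)^2 * (t * C) = e * (real (card s)^2 * C / (real (card s)^2 * C + 1))"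
        unfolding t_def by (simp add: field_simps)
      also have "\<dots> \<le> e * 1" using e den C0 by (intro mult_left_mono) auto
      finally show ?thesis by simp
    qed
    have "\<forall>v\<in>s. \<exists>x. norm x = 1 \<and> norm (A x - scaleC v x) < t"
      using spectrum_approx_ev[OF nA sv(1)] t0 unfolding approx_ev_def by blast
    then obtain X where X: "\<And>v. v \<in> s \<Longrightarrow> norm (X v) = 1"
      "\<And>v. v \<in> s \<Longrightarrow> norm (A (X v) - scaleC v (X v)) < t"
      using bchoice[of s "\<lambda>v x. norm x = 1 \<and> norm (A x - scaleC v x) < t"] by blast
    have XB: "norm (B (X v) - scaleC (cnj v) (X v)) < t" if "v \<in> s" for v
    proof -
      have "norm ((\<lambda>x. A x - scaleC v x) (X v)) = norm ((\<lambda>x. B x - scaleC (cnj v) x) (X v))"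
        by (rule normal_norm_eq[OF adj_shift[OF AB(1-3)]])
           (use comm_shift[OF AB(1,2), where m=v and n="cnj v"] AB(4) in simp)
      then show ?thesis using X(2)[OF that] by simp
    qed
    define a where "a v = sqrt (u v)" for v
    have a: "\<And>v. v \<in> s \<Longrightarrow> 0 \<le> a v \<and> a v \<le> 1" unfolding a_def using u(1) ub by auto
    have a2: "\<And>v. v \<in> s \<Longrightarrow> (a v)^2 = u v" unfolding a_def using u(1) by simp
    define y where "y = (\<Sum>v\<in>s. scaleR (a v) (X v))"
    have Ay: "A y = (\<Sum>v\<in>s. scaleR (a v) (A (X v)))"
      unfolding y_def by (simp add: bcl_sum[OF AB(1)] bcl_scaleR[OF AB(1)])
    have CB: "2*t/d \<le> t*C" "t + M*(2*t/d) \<le> t*C" "M*t + M*(t + M*(2*t/d)) \<le> t*C"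
      "t \<le> t*C" "2*M*t \<le> t*C" "0 \<le> t*C"
      unfolding C_def using Cbound[OF M0 d(1) less_imp_le[OF t0]] by auto
    have g: "cmod (cinner (X v) (X w) - (if v = w then 1 else 0)) \<le> t * C \<and>
             cmod (cinner (A (X v)) (X w) - (if v = w then v else 0)) \<le> t * C \<and>
             cmod (cinner (A (X v)) (A (X w)) - (if v = w then of_real (M^2) else 0)) \<le> t * C"
      if vw: "v \<in> s" "w \<in> s" for v w
    proof (cases "v = w")
      case True
      note D = diag_bounds[OF X(1)[OF vw(1)] less_imp_le[OF X(2)[OF vw(1)]] sv(2)[OF vw(1)] bnd AB(1)]
      show ?thesis using True D CB by auto
    next
      case False
      note O = off_bounds[OF AB(1) AB(3) X(1)[OF vw(1)] X(1)[OF vw(2)]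
          less_imp_le[OF X(2)[OF vw(1)]] less_imp_le[OF X(2)[OF vw(2)]] less_imp_le[OF XB[OF vw(2)]]
          sv(2)[OF vw(1)] sv(2)[OF vw(2)] bnd d(1)]
      have dd: "d \<le> cmod (v - w)" using d(2) vw False by blast
      show ?thesis using False O[OF dd] CB by auto
    qed
    have G1: "cmod ((\<Sum>v\<in>s. \<Sum>w\<in>s. of_real (a v * a w) * cinner (X v) (X w)) - (\<Sum>v\<in>s. of_real ((a v)^2) * 1))
        \<le> real (card s)^2 * (t*C)"
      by (rule gram[OF s(1) a]) (use g in auto)
    have G2: "cmod ((\<Sum>v\<in>s. \<Sum>w\<in>s. of_real (a v * a w) * cinner (A (X v)) (X w)) - (\<Sum>v\<in>s. of_real ((a v)^2) * v))
        \<le> real (card s)^2 * (t*C)"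
      by (rule gram[OF s(1) a]) (use g in auto)
    have G3: "cmod ((\<Sum>v\<in>s. \<Sum>w\<in>s. of_real (a v * a w) * cinner (A (X v)) (A (X w))) - (\<Sum>v\<in>s. of_real ((a v)^2) * of_real (M^2)))
        \<le> real (card s)^2 * (t*C)"
      by (rule gram[OF s(1) a]) (use g in auto)
    have su: "(\<Sum>v\<in>s. complex_of_real (u v)) = 1"
      using u(2) by (metis of_real_1 of_real_sum)
    have S1: "(\<Sum>v\<in>s. of_real ((a v)^2) * (1::complex)) = 1"
    proof -
      have "(\<Sum>v\<in>s. of_real ((a v)^2) * (1::complex)) = (\<Sum>v\<in>s. complex_of_real (u v))"
        by (rule sum.cong) (simp_all add: a2)
      then show ?thesis using su by simp
    qed
    have S2: "(\<Sum>v\<in>s. of_real ((a v)^2) * v) = l"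
    proof -
      have "(\<Sum>v\<in>s. of_real ((a v)^2) * v) = (\<Sum>v\<in>s. u v *\<^sub>R v)"
        by (rule sum.cong) (simp_all add: a2 scaleR_conv_of_real)
      then show ?thesis using u(3) by simp
    qed
    have S3: "(\<Sum>v\<in>s. of_real ((a v)^2) * complex_of_real (M^2)) = of_real (M^2)"
    proof -
      have "(\<Sum>v\<in>s. of_real ((a v)^2) * complex_of_real (M^2)) = (\<Sum>v\<in>s. complex_of_real (u v)) * of_real (M^2)"
        by (simp add: sum_distrib_right a2 del: of_real_power)
      then show ?thesis using su by simp
    qed
    have E1: "cinner y y = (\<Sum>v\<in>s. \<Sum>w\<in>s. of_real (a v * a w) * cinner (X v) (X w))"
      unfolding y_def by (rule cinner_sum_expand)
    have E2: "cinner (A y) y = (\<Sum>v\<in>s. \<Sum>w\<in>s. of_real (a v * a w) * cinner (A (X v)) (X w))"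
      unfolding Ay unfolding y_def by (rule cinner_sum_expand)
    have E3: "cinner (A y) (A y) = (\<Sum>v\<in>s. \<Sum>w\<in>s. of_real (a v * a w) * cinner (A (X v)) (A (X w)))"
      unfolding Ay by (rule cinner_sum_expand)
    have cs: "cmod (cinner z z - of_real r) = \<bar>(norm z)^2 - r\<bar>" for z :: 'a and r
      by (simp only: cinner_self of_real_diff[symmetric] norm_of_real)
    have "\<bar>(norm y)^2 - 1\<bar> \<le> e"
      using G1 tC unfolding S1 E1[symmetric] using cs[of y 1] by simp
    moreover have "\<bar>(norm (A y))^2 - (onorm A)^2\<bar> \<le> e"
      using G3 tC unfolding S3 E3[symmetric] cs unfolding M_def by simp
    moreover have "cmod (cinner (A y) y - l) \<le> e"
      using G2 tC unfolding S2 E2[symmetric] by simp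
    ultimately show "\<exists>y. \<bar>(norm y)^2 - 1\<bar> \<le> e \<and> \<bar>(norm (A y))^2 - (onorm A)^2\<bar> \<le> e \<and> cmod (cinner (A y) y - l) \<le> e"
      by blast
  qed
qed

lemma bl_add: "bounded_linear P \<Longrightarrow> P (x + y) = P x + P y"
  using bounded_linear.linear linear_add by blast
lemma bl_scaleR: "bounded_linear P \<Longrightarrow> P (scaleR r x) = scaleR r (P x)"
  using bounded_linear.linear linear_scale by blast
lemma bl_diff: "bounded_linear P \<Longrightarrow> P (x - y) = P x - P y"
  using bounded_linear.linear linear_diff by blast
lemma bl_zero: "bounded_linear P \<Longrightarrow> P 0 = 0"
  using bounded_linear.linear linear_0 by blast

definition sa :: "('a::complex_inner \<Rightarrow> 'a) \<Rightarrow> bool" where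
  "sa P \<longleftrightarrow> (\<forall>x y. rin (P x) y = rin x (P y))"

definition qf :: "('a::complex_inner \<Rightarrow> 'a) \<Rightarrow> 'a \<Rightarrow> real" where
  "qf P x = rin (P x) x"

lemma qf_scaleR: "bounded_linear P \<Longrightarrow> qf P (scaleR r x) = r^2 * qf P x"
  by (simp add: qf_def bl_scaleR rin_scaleR_left rin_scaleR_right power2_eq_square)

lemma qf_add:
  assumes "bounded_linear P" "sa P"
  shows "qf P (u + v) = qf P u + 2 * rin (P u) v + qf P v"
proof -
  have "rin (P v) u = rin (P u) v" using assms(2) unfolding sa_def by (metis rin_commute)
  then show ?thesis unfolding qf_def
    by (simp add: bl_add[OF assms(1)] rin_add_left rin_add_right)
qed

lemma gcs:
  assumes P: "bounded_linear P" "sa P" and pos: "\<And>x. 0 \<le> qf P x"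
  shows "(rin (P u) v)^2 \<le> qf P u * qf P v"
proof -
  let ?c = "rin (P u) v" and ?a = "qf P u" and ?b = "qf P v"
  have key: "0 \<le> ?a + 2 * t * ?c + t^2 * ?b" for t
  proof -
    have "0 \<le> qf P (u + scaleR t v)" by (rule pos)
    also have "\<dots> = ?a + 2 * t * ?c + t^2 * ?b"
      by (simp add: qf_add[OF P] qf_scaleR[OF P(1)] bl_scaleR[OF P(1)] rin_scaleR_right)
    finally show ?thesis .
  qed
  have a0: "0 \<le> ?a" by (rule pos)
  show ?thesis
  proof (cases "?b = 0")
    case True
    have "?c = 0"
    proof (rule ccontr)
      assume c: "?c \<noteq> 0"
      have "0 \<le> ?a + 2 * (- (?a + 1) / (2 * ?c)) * ?c + (- (?a + 1) / (2 * ?c))^2 * ?b"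
        by (rule key)
      also have "\<dots> = -1" using c True by (simp add: field_simps)
      finally show False by simp
    qed
    then show ?thesis using True by simp
  next
    case False
    then have b: "?b > 0" using pos[of v] by simp
    have "0 \<le> ?a + 2 * (- ?c / ?b) * ?c + (- ?c / ?b)^2 * ?b" by (rule key)
    also have "\<dots> = ?a - ?c^2 / ?b" using b by (simp add: field_simps power2_eq_square)
    finally have "?c^2 / ?b \<le> ?a" by simp
    then show ?thesis using b by (simp add: field_simps mult.commute)
  qed
qed

lemma posbound:
  assumes P: "bounded_linear P" "sa P" and pos: "\<And>x. 0 \<le> qf P x"
    and bnd: "\<And>x. norm (P x) \<le> C * norm x"
  shows "(norm (P u))^2 \<le> C * qf P u"
proof (cases "P u = 0")
  case True
  have "0 \<le> C * qf P u"
  proof -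
    have "0 \<le> C * norm (P u)" using bnd[of "P u"] True by (simp add: bl_zero[OF P(1)])
    show ?thesis
    proof (cases "u = 0")
      case True then show ?thesis by (simp add: qf_def)
    next
      case False
      have "0 \<le> C * norm u" using bnd[of u] norm_ge_zero order_trans by blast
      then have "0 \<le> C" using False by (simp add: zero_le_mult_iff)
      then show ?thesis using pos[of u] by simp
    qed
  qed
  then show ?thesis using True by simp
next
  case False
  let ?n = "norm (P u)"
  have n0: "?n > 0" using False by simp
  have "rin (P u) (P u) = ?n^2" by (rule rin_self)
  then have "(?n^2)^2 \<le> qf P u * qf P (P u)" using gcs[OF P pos, of u "P u"] by simp
  also have "\<dots> \<le> qf P u * (C * ?n^2)"
  proof (rule mult_left_mono)
    have "qf P (P u) \<le> norm (P (P u)) * norm (P u)" unfolding qf_def by (rule rin_cs)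
    also have "\<dots> \<le> C * ?n * ?n" using bnd[of "P u"] by (simp add: mult_right_mono)
    finally show "qf P (P u) \<le> C * ?n^2" by (simp add: power2_eq_square mult.assoc)
  qed (rule pos)
  finally have "?n^2 * ?n^2 \<le> (C * qf P u) * ?n^2" by (simp add: power2_eq_square mult_ac)
  from mult_right_le_imp_le[OF this] show ?thesis using n0 by simp
qed

lemma sa_diff: "sa P \<Longrightarrow> sa R \<Longrightarrow> sa (\<lambda>x. P x - R x)"
  unfolding sa_def by (simp add: rin_diff_left rin_diff_right)
lemma sa_add: "sa P \<Longrightarrow> sa R \<Longrightarrow> sa (\<lambda>x. P x + R x)"
  unfolding sa_def by (simp add: rin_add_left rin_add_right)
lemma sa_scale: "sa P \<Longrightarrow> sa (\<lambda>x. scaleR r (P x))"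
  unfolding sa_def by (simp add: rin_scaleR_left rin_scaleR_right)
lemma sa_id: "sa (\<lambda>x. x)"
  unfolding sa_def by simp
lemma sa_idscale: "sa (\<lambda>x. scaleR r x)"
  unfolding sa_def by (simp add: rin_scaleR_left rin_scaleR_right)

lemma quartic:
  fixes a L d0 CQ e1 :: real
  assumes a: "0 \<le> a" and L: "1 \<le> L" and d0: "0 < d0" and CQ: "0 \<le> CQ" and e1: "0 \<le> e1"
    and e1b: "e1 \<le> d0^2 / (L * (CQ + 1))"
    and main: "L^2 * a^4 \<le> 2*d0 * (d0 * a^2 + CQ * e1 * a)"
  shows "L * a \<le> 2 * d0"
proof (rule ccontr)
  assume "\<not> L * a \<le> 2 * d0"
  then have s: "2 * d0 < L * a" by simp
  define s where "s = L * a"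
  have sp: "s > 0" using s d0 unfolding s_def by simp
  have ap: "a > 0" using sp L a unfolding s_def by (simp add: zero_less_mult_iff)
  have h1: "CQ * e1 * L \<le> d0^2"
  proof -
    have X: "L * (CQ + 1) > 0" using L CQ by simp
    have "e1 * (L * (CQ + 1)) \<le> d0^2 / (L * (CQ + 1)) * (L * (CQ + 1))"
      using mult_right_mono[OF e1b, of "L * (CQ + 1)"] X by simp
    moreover have "d0^2 / (L * (CQ + 1)) * (L * (CQ + 1)) = d0^2"
      using X by (metis divide_eq_eq less_irrefl)
    ultimately have "e1 * (L * (CQ + 1)) \<le> d0^2" by simp
    moreover have "CQ * e1 * L \<le> e1 * (L * (CQ + 1))" using e1 L by (simp add: algebra_simps)
    ultimately show ?thesis by linarith
  qed
  have h2: "s^2 * a^2 \<le> 2 * d0^2 * a^2 + 2 * d0 * CQ * e1 * a"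
    using main unfolding s_def by (simp add: power2_eq_square algebra_simps power4_eq_xxxx)
  have "(2*d0)^2 < s^2" unfolding s_def by (rule power_strict_mono) (use s d0 in auto)
  then have h3: "4 * d0^2 * a^2 < s^2 * a^2" using ap by (simp add: power2_eq_square)
  have "s^2 * a^2 < 4 * d0 * CQ * e1 * a" using h2 h3 by linarith
  then have "s^2 * a * a < (4 * d0 * CQ * e1) * a" by (simp add: power2_eq_square mult_ac)
  then have "s^2 * a < 4 * d0 * CQ * e1" using ap by simp
  then have "s^2 * a * L < 4 * d0 * CQ * e1 * L" using L by simp
  then have "s^3 < 4 * d0 * (CQ * e1 * L)" unfolding s_def by (simp add: power3_eq_cube power2_eq_square mult_ac)
  also have "\<dots> \<le> 4 * d0 * d0^2" using h1 d0 by simp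
  finally have "s^3 < (2*d0)^3 / 2" by (simp add: power3_eq_cube power2_eq_square)
  moreover have "(2*d0)^3 < s^3" unfolding s_def by (rule power_strict_mono) (use s d0 in auto)
  moreover have "0 < (2*d0)^3" using d0 by simp
  ultimately show False by linarith
qed

lemma joint:
  fixes T Q :: "'a::complex_inner \<Rightarrow> 'a" and beta :: real
  assumes T: "bounded_linear T" "sa T" and Q: "bounded_linear Q" "sa Q"
    and comm: "\<And>x. T (Q x) = Q (T x)"
    and pos: "\<And>x. 0 \<le> qf Q x"
    and hyp: "\<And>e. e > 0 \<Longrightarrow> \<exists>x. norm x = 1 \<and> qf Q x < e \<and> beta - e < qf T x"
  shows "\<exists>b\<ge>beta. \<forall>e>0. \<exists>y. norm y = 1 \<and> qf Q y < e \<and> norm (T y - scaleR b y) < e"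
proof -
  obtain CT where CT: "CT > 0" "\<And>x. norm (T x) \<le> norm x * CT"
    using bounded_linear.pos_bounded[OF T(1)] by blast
  obtain CQ where CQ: "CQ > 0" "\<And>x. norm (Q x) \<le> norm x * CQ"
    using bounded_linear.pos_bounded[OF Q(1)] by blast
  define U where "U = {x::'a. norm x = 1}"
  have Une: "U \<noteq> {}" using hyp[of 1] unfolding U_def by auto
  define h where "h K x = qf T x - K * qf Q x" for K x
  have qT: "qf T x \<le> CT * (norm x)^2" for x
  proof -
    have "qf T x \<le> norm (T x) * norm x" unfolding qf_def by (rule rin_cs)
    also have "\<dots> \<le> (norm x * CT) * norm x" using CT(2)[of x] by (simp add: mult_right_mono)
    finally show ?thesis by (simp add: power2_eq_square mult_ac)
  qed
  have hle: "h K x \<le> CT" if "K \<ge> 0" "x \<in> U" for K x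
  proof -
    have "K * qf Q x \<ge> 0" using that pos by simp
    then show ?thesis using qT[of x] that unfolding h_def U_def by simp
  qed
  have bdd: "bdd_above (h K ` U)" if "K \<ge> 0" for K
    unfolding bdd_above_def using hle[OF that] by blast
  define m where "m K = Sup (h K ` U)" for K
  have m_up: "h K x \<le> m K" if "K \<ge> 0" "x \<in> U" for K x
    unfolding m_def by (rule cSUP_upper[OF that(2) bdd[OF that(1)]])
  have m_apx: "\<exists>x\<in>U. m K - eta < h K x" if "eta > 0" for K eta
  proof -
    have "m K - eta < Sup (h K ` U)" unfolding m_def using that by simp
    then show ?thesis using less_cSupD[of "h K ` U" "m K - eta"] Une by auto
  qed
  have h0: "h K 0 = 0" for K unfolding h_def qf_def by (simp add: bl_zero[OF T(1)] bl_zero[OF Q(1)])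
  have h_scale: "h K (scaleR r x) = r^2 * h K x" for K r x
    by (simp add: h_def qf_scaleR[OF T(1)] qf_scaleR[OF Q(1)] algebra_simps)
  have m_hom: "h K x \<le> m K * (norm x)^2" if "K \<ge> 0" for K x
  proof (cases "x = 0")
    case True then show ?thesis by (simp add: h0)
  next
    case False
    define u where "u = scaleR (1 / norm x) x"
    have u: "u \<in> U" unfolding u_def U_def using False by simp
    have "x = scaleR (norm x) u" unfolding u_def using False by simp
    then have "h K x = (norm x)^2 * h K u" by (metis h_scale)
    also have "\<dots> \<le> (norm x)^2 * m K" using m_up[OF that u] by (simp add: mult_left_mono)
    finally show ?thesis by (simp add: mult.commute)
  qed
  have m_beta: "beta \<le> m K" if K: "K \<ge> 0" for K
  proof (rule ccontr)
    assume "\<not> beta \<le> m K"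
    then have lt: "m K < beta" by simp
    define eta where "eta = (beta - m K) / (K + 1)"
    have eta: "eta > 0" unfolding eta_def using lt K by simp
    obtain x where x: "norm x = 1" "qf Q x < eta" "beta - eta < qf T x" using hyp[OF eta] by blast
    have "K * qf Q x \<le> K * eta" using x(2) K by (simp add: mult_left_mono)
    then have "beta - (K + 1) * eta < h K x" using x(3) unfolding h_def by (simp add: algebra_simps)
    also have "(K + 1) * eta = beta - m K" unfolding eta_def using K by simp
    finally have "m K < h K x" by simp
    moreover have "h K x \<le> m K" using m_up[OF K] x(1) unfolding U_def by simp
    ultimately show False by simp
  qed
  have m_mono: "m K2 \<le> m K" if "0 \<le> K" "K \<le> K2" for K K2
    unfolding m_def[of K2]
  proof (rule cSup_least)
    show "h K2 ` U \<noteq> {}" using Une by simp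
    fix v assume "v \<in> h K2 ` U"
    then obtain x where x: "x \<in> U" "v = h K2 x" by blast
    have "K * qf Q x \<le> K2 * qf Q x" using that pos[of x] by (simp add: mult_right_mono)
    then have "h K2 x \<le> h K x" unfolding h_def by simp
    also have "\<dots> \<le> m K" by (rule m_up[OF that(1) x(1)])
    finally show "v \<le> m K" using x(2) by simp
  qed
  define b where "b = Inf (range (\<lambda>k::nat. m (real k)))"
  have bddb: "bdd_below (range (\<lambda>k::nat. m (real k)))"
  proof (rule bdd_belowI)
    fix x assume "x \<in> range (\<lambda>k::nat. m (real k))"
    then show "beta \<le> x" using m_beta by auto
  qed
  have b_le: "b \<le> m (real k)" for k unfolding b_def by (rule cInf_lower) (use bddb in auto)
  have b_ge: "beta \<le> b" unfolding b_def by (rule cInf_greatest) (use m_beta in auto)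
  have b_apx: "\<exists>k. m (real k) < b + eta" if "eta > 0" for eta
    using cInf_lessD[of "range (\<lambda>k::nat. m (real k))" "b + eta"] that unfolding b_def by auto
  show ?thesis
  proof (intro exI[of _ b] conjI allI impI b_ge)
    fix e :: real assume e: "e > 0"
    define d0 where "d0 = e / 8"
    have d0: "d0 > 0" unfolding d0_def using e by simp
    obtain k' where k': "m (real k') < b + d0" using b_apx[OF d0] by blast
    define K' where "K' = real k'"
    define K where "K = 2 * K' + 1"
    define L where "L = K - K'"
    have K'0: "0 \<le> K'" unfolding K'_def by simp
    have K0: "0 \<le> K" unfolding K_def using K'0 by simp
    have KK': "K' \<le> K" unfolding K_def using K'0 by simp
    have L1: "1 \<le> L" unfolding L_def K_def using K'0 by simp
    have KL: "K \<le> 2 * L" unfolding L_def K_def by simp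
    have mKb: "b \<le> m K"
    proof -
      have "K = real (2 * k' + 1)" unfolding K_def K'_def by simp
      then show ?thesis using b_le[of "2 * k' + 1"] by simp
    qed
    have mKK': "m K \<le> m K'" by (rule m_mono[OF K'0 KK'])
    define del where "del = m K' - m K"
    have del: "0 \<le> del" "del < d0" unfolding del_def using mKK' mKb k' K'_def by auto
    define e1 where "e1 = min (min d0 1) (d0^2 / (L * (CQ + 1)))"
    have e1: "0 < e1" "e1 \<le> d0" "e1 \<le> 1" "e1 \<le> d0^2 / (L * (CQ + 1))"
      unfolding e1_def using d0 L1 CQ(1) by auto
    define P where "P = (\<lambda>x. scaleR (m K) x - (T x - scaleR K (Q x)))"
    have Pbl: "bounded_linear P" unfolding P_def
      by (intro bounded_linear_sub bounded_linear_scaleR_right T(1) bounded_linear_const_scaleR Q(1))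
    have Psa: "sa P" unfolding P_def
      by (intro sa_diff sa_idscale T(2) sa_scale Q(2))
    have qP: "qf P x = m K * (norm x)^2 - h K x" for x
      unfolding qf_def P_def h_def by (simp add: rin_diff_left rin_scaleR_left rin_self)
    have Ppos: "0 \<le> qf P x" for x using m_hom[OF K0, of x] qP[of x] by simp
    define CP where "CP = \<bar>m K\<bar> + CT + K * CQ"
    have CP0: "0 \<le> CP" unfolding CP_def using CT CQ K0 by simp
    have CPb: "norm (P x) \<le> CP * norm x" for x
    proof -
      have "norm (P x) \<le> norm (scaleR (m K) x) + norm (T x - scaleR K (Q x))"
        unfolding P_def by (rule norm_triangle_ineq4)
      also have "\<dots> \<le> \<bar>m K\<bar> * norm x + (norm (T x) + norm (scaleR K (Q x)))"
        using norm_triangle_ineq4[of "T x" "scaleR K (Q x)"] by simp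
      also have "\<dots> \<le> \<bar>m K\<bar> * norm x + (norm x * CT + K * (norm x * CQ))"
        using CT(2)[of x] mult_left_mono[OF CQ(2)[of x] K0] K0 by simp
      also have "\<dots> = CP * norm x" unfolding CP_def by (simp add: algebra_simps)
      finally show ?thesis .
    qed
    define eta where "eta = e1^2 / (CP + 1)"
    have eta: "0 < eta" "eta \<le> e1" "CP * eta < e1^2"
    proof -
      show "0 < eta" unfolding eta_def using e1 CP0 by simp
      have "eta \<le> e1^2" unfolding eta_def using e1 CP0 by (simp add: field_simps)
      also have "e1^2 \<le> e1" using e1 by (simp add: power2_eq_square mult_left_le_one_le)
      finally show "eta \<le> e1" .
      have "CP * eta = e1^2 * (CP / (CP + 1))" unfolding eta_def by simp
      also have "\<dots> < e1^2 * 1" using e1 CP0 by (intro mult_strict_left_mono) auto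
      finally show "CP * eta < e1^2" by simp
    qed
    obtain y where y: "y \<in> U" "m K - eta < h K y" using m_apx[OF eta(1)] by blast
    have ny: "norm y = 1" using y(1) unfolding U_def by simp
    have qPy: "qf P y < eta" using qP[of y] y(2) ny by simp
    have Py: "norm (P y) < e1"
    proof -
      have "(norm (P y))^2 \<le> CP * qf P y" by (rule posbound[OF Pbl Psa Ppos CPb])
      also have "\<dots> \<le> CP * eta" using qPy CP0 by (simp add: mult_left_mono)
      also have "\<dots> < e1^2" by (rule eta(3))
      finally show ?thesis using e1 by (simp add: power_less_imp_less_base)
    qed
    define ev where "ev = T y - scaleR K (Q y) - scaleR (m K) y"
    have ev_eq: "ev = - P y" unfolding ev_def P_def by (simp add: algebra_simps)
    have nev: "norm ev < e1" using Py ev_eq by simp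
    define z where "z = Q y"
    define a where "a = norm z"
    have a0: "0 \<le> a" unfolding a_def by simp
    have qy0: "0 \<le> qf Q y" by (rule pos)
    have qz0: "0 \<le> qf Q z" by (rule pos)
    have i: "L * qf Q y \<le> del + e1"
    proof -
      have "h K' y \<le> m K'" by (rule m_up[OF K'0 y(1)])
      moreover have "h K' y - h K y = L * qf Q y" unfolding h_def L_def by (simp add: algebra_simps)
      ultimately have "L * qf Q y \<le> m K' - m K + eta" using y(2) by linarith
      then show ?thesis unfolding del_def using eta(2) by linarith
    qed
    have Ty: "T y = ev + scaleR K z + scaleR (m K) y" unfolding ev_def z_def by (simp add: algebra_simps)
    have Tz: "T z = Q ev + scaleR K (Q z) + scaleR (m K) z"
    proof -
      have "T z = Q (T y)" unfolding z_def by (rule comm)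
      also have "\<dots> = Q ev + scaleR K (Q z) + scaleR (m K) z"
        unfolding Ty by (simp add: bl_add[OF Q(1)] bl_scaleR[OF Q(1)] z_def)
      finally show ?thesis .
    qed
    have ii: "L * qf Q z \<le> del * a^2 + CQ * e1 * a"
    proof -
      have hz: "h K' z \<le> m K' * a^2" unfolding a_def by (rule m_hom[OF K'0])
      have qTz: "qf T z = rin (Q ev) z + K * qf Q z + m K * a^2"
        unfolding qf_def Tz a_def by (simp add: rin_add_left rin_scaleR_left rin_self)
      have "- rin (Q ev) z \<le> norm (Q ev) * a"
        unfolding a_def using rin_cs_abs[of "Q ev" z] by linarith
      also have "\<dots> \<le> (e1 * CQ) * a"
      proof (rule mult_right_mono[OF _ a0])
        have "norm (Q ev) \<le> norm ev * CQ" by (rule CQ(2))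
        also have "\<dots> \<le> e1 * CQ" using nev CQ(1) by (simp add: mult_right_mono)
        finally show "norm (Q ev) \<le> e1 * CQ" .
      qed
      finally have r: "- rin (Q ev) z \<le> CQ * e1 * a" by (simp add: mult_ac)
      have "L * qf Q z = h K' z - rin (Q ev) z - m K * a^2"
        unfolding h_def qTz L_def by (simp add: algebra_simps)
      then show ?thesis using hz r unfolding del_def by (simp add: algebra_simps)
    qed
    have iii: "L^2 * a^4 \<le> 2*d0 * (d0 * a^2 + CQ * e1 * a)"
    proof -
      have "rin (Q y) z = a^2" unfolding a_def z_def by (simp add: rin_self)
      then have "(a^2)^2 \<le> qf Q y * qf Q z" using gcs[OF Q(1) Q(2) pos, of y z] by simp
      then have "L^2 * a^4 \<le> L^2 * (qf Q y * qf Q z)"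
        by (simp add: power_mult[symmetric] mult_left_mono)
      also have "\<dots> = (L * qf Q y) * (L * qf Q z)" by (simp add: power2_eq_square mult_ac)
      also have "\<dots> \<le> (2 * d0) * (d0 * a^2 + CQ * e1 * a)"
      proof (rule mult_mono)
        show "L * qf Q y \<le> 2 * d0" using i del e1 by linarith
        have "del * a^2 \<le> d0 * a^2" using del by (simp add: mult_right_mono)
        then show "L * qf Q z \<le> d0 * a^2 + CQ * e1 * a" using ii by linarith
        show "0 \<le> 2 * d0" using d0 by simp
        show "0 \<le> L * qf Q z" using L1 qz0 by simp
      qed
      finally show ?thesis .
    qed
    have La: "L * a \<le> 2 * d0"
      by (rule quartic[OF a0 L1 d0 less_imp_le[OF CQ(1)] less_imp_le[OF e1(1)] e1(4) iii])
    have Ka: "K * a \<le> 4 * d0"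
    proof -
      have "K * a \<le> (2 * L) * a" using KL a0 by (simp add: mult_right_mono)
      then show ?thesis using La by simp
    qed
    have "T y - scaleR b y = ev + scaleR K z + scaleR (m K - b) y"
      unfolding Ty by (simp add: algebra_simps)
    moreover have "norm (ev + scaleR K z + scaleR (m K - b) y) \<le> norm (ev + scaleR K z) + norm (scaleR (m K - b) y)"
      by (rule norm_triangle_ineq)
    moreover have "norm (ev + scaleR K z) \<le> norm ev + norm (scaleR K z)"
      by (rule norm_triangle_ineq)
    ultimately have "norm (T y - scaleR b y) \<le> norm ev + norm (scaleR K z) + norm (scaleR (m K - b) y)"
      by simp
    also have "\<dots> = norm ev + K * a + (m K - b)"
      using K0 mKb ny unfolding a_def by simp
    also have "\<dots> < e"
      using nev e1(2) Ka mKb mKK' k' del d0_def unfolding K'_def by linarith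
    finally have n1: "norm (T y - scaleR b y) < e" .
    have "qf Q y \<le> L * qf Q y" using L1 qy0 by (simp add: mult_le_cancel_right1)
    then have n2: "qf Q y < e" using i del e1 d0_def by linarith
    show "\<exists>y. norm y = 1 \<and> qf Q y < e \<and> norm (T y - scaleR b y) < e"
      using ny n1 n2 by blast
  qed
qed

definition csa :: "('a::complex_inner \<Rightarrow> 'a) \<Rightarrow> bool" where
  "csa P \<longleftrightarrow> (\<forall>x y. cinner (P x) y = cinner x (P y))"

lemma csa_sa: "csa P \<Longrightarrow> sa P"
  unfolding csa_def sa_def rin_def by simp

lemma sa_sq: "sa R \<Longrightarrow> sa (\<lambda>x. R (R x))"
  unfolding sa_def by simp

lemma qf_sq: "sa R \<Longrightarrow> qf (\<lambda>x. R (R x)) x = (norm (R x))^2"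
  unfolding sa_def qf_def by (simp add: rin_self)

lemma key5a_ops:
  fixes A B :: "'a::complex_inner \<Rightarrow> 'a"
  assumes AB: "bounded_clinear A" "bounded_clinear B" "is_adjoint A B" "\<And>x. A (B x) = B (A x)"
    and w: "cmod w = 1"
  defines "N \<equiv> \<lambda>x. scaleC (cnj w) (A x)"
  defines "N' \<equiv> \<lambda>x. scaleC w (B x)"
  shows "bounded_clinear N" "bounded_clinear N'" "is_adjoint N N'" "\<And>x. N (N' x) = N' (N x)"
    "\<And>x. N' (N x) = B (A x)" "\<And>x. A x = scaleC w (N x)"
proof -
  have ww1: "w * cnj w = 1" using complex_norm_square[of w] w by simp
  then have ww: "w * cnj w = 1" "cnj w * w = 1" by (simp_all add: mult.commute)
  show "bounded_clinear N" unfolding N_def by (rule bcl_scale_op[OF AB(1)])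
  show "bounded_clinear N'" unfolding N'_def by (rule bcl_scale_op[OF AB(2)])
  show "is_adjoint N N'" using AB(3) unfolding is_adjoint_def N_def N'_def
    by (simp add: cinner_scaleC_left cinner_scaleC_right)
  show "N (N' x) = N' (N x)" for x
    unfolding N_def N'_def by (simp add: bcl_scaleC[OF AB(1)] bcl_scaleC[OF AB(2)] scaleC_scaleC AB(4) mult.commute)
  show "N' (N x) = B (A x)" for x
    unfolding N_def N'_def by (simp add: bcl_scaleC[OF AB(2)] scaleC_scaleC ww scaleC_one)
  show "A x = scaleC w (N x)" for x
    unfolding N_def by (simp add: scaleC_scaleC ww scaleC_one)
qed

lemma key5a:
  fixes A :: "'a::chilbert_space \<Rightarrow> 'a"
  assumes nA: "normal_op A" and l: "l \<in> max_numerical_range A" and w: "cmod w = 1"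
  shows "\<exists>\<mu>. \<mu> \<in> op_spectrum A \<and> cmod \<mu> = onorm A \<and> Re (cnj w * l) \<le> Re (cnj w * \<mu>)"
proof -
  obtain B where AB: "bounded_clinear A" "bounded_clinear B" "is_adjoint A B" "\<And>x. A (B x) = B (A x)"
    using nA unfolding normal_op_def by blast
  define M where "M = onorm A"
  have M0: "0 \<le> M" unfolding M_def by (rule bcl_onorm_nonneg[OF AB(1)])
  have bnd: "\<And>z. norm (A z) \<le> M * norm z" unfolding M_def using bcl_norm[OF AB(1)] .
  define N where "N = (\<lambda>x. scaleC (cnj w) (A x))"
  define N' where "N' = (\<lambda>x. scaleC w (B x))"
  note ops = key5a_ops[OF AB w]
  have N: "bounded_clinear N" using ops(1) unfolding N_def .
  have N': "bounded_clinear N'" using ops(2) unfolding N'_def .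
  have adj: "is_adjoint N N'" using ops(3) unfolding N_def N'_def .
  have comm: "N (N' x) = N' (N x)" for x using ops(4)[of x] unfolding N_def N'_def by simp
  have NN: "N' (N x) = B (A x)" for x using ops(5)[of x] unfolding N_def N'_def by simp
  have AN: "A x = scaleC w (N x)" for x using ops(6)[of x] unfolding N_def N'_def by simp
  define T1 where "T1 = (\<lambda>x. scaleC (1/2) (N x + N' x))"
  define T2 where "T2 = (\<lambda>x. scaleC (- \<i>/2) (N x - N' x))"
  define Q1 where "Q1 = (\<lambda>x. scaleC (of_real (M^2)) x - N' (N x))"
  have T1c: "bounded_clinear T1" unfolding T1_def by (rule bcl_scale_op[OF bcl_add_op[OF N N']])
  have T2c: "bounded_clinear T2" unfolding T2_def by (rule bcl_scale_op[OF bcl_diff_op[OF N N']])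
  have Q1c: "bounded_clinear Q1" unfolding Q1_def by (rule bcl_diff_op[OF bcl_scale_id bcl_compose[OF N' N]])
  have adj': "cinner (N' x) y = cinner x (N y)" for x y by (rule adj_sym[OF adj])
  have adjN: "cinner (N x) y = cinner x (N' y)" for x y using adj unfolding is_adjoint_def by simp
  have T1s: "csa T1" unfolding csa_def T1_def
    by (simp add: cinner_scaleC_left cinner_scaleC_right cinner_add_left cinner_add_right adj' adjN)
  have T2s: "csa T2" unfolding csa_def T2_def
    by (simp add: cinner_scaleC_left cinner_scaleC_right cinner_diff_left cinner_diff_right adj' adjN algebra_simps)
  have Q1s: "csa Q1" unfolding csa_def Q1_def
    by (simp add: cinner_scaleC_left cinner_scaleC_right cinner_diff_left cinner_diff_right adj' adjN)
  note simps = bcl_add[OF N] bcl_add[OF N'] bcl_diff[OF N] bcl_diff[OF N'] bcl_scaleC[OF N] bcl_scaleC[OF N']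
    scaleC_add_right scaleC_diff_right scaleC_scaleC comm
  have cT1Q1: "T1 (Q1 x) = Q1 (T1 x)" for x
    unfolding T1_def Q1_def by (simp add: simps algebra_simps)
  have cT2Q1: "T2 (Q1 x) = Q1 (T2 x)" for x
    unfolding T2_def Q1_def by (simp add: simps algebra_simps)
  have cT2T1: "T2 (T1 x) = T1 (T2 x)" for x
    unfolding T2_def T1_def by (simp add: simps algebra_simps)
  have T1bl: "bounded_linear T1" using T1c by (rule bcl_bl)
  have T2bl: "bounded_linear T2" using T2c by (rule bcl_bl)
  have Q1bl: "bounded_linear Q1" using Q1c by (rule bcl_bl)
  have T1sa: "sa T1" by (rule csa_sa[OF T1s])
  have T2sa: "sa T2" by (rule csa_sa[OF T2s])
  have Q1sa: "sa Q1" by (rule csa_sa[OF Q1s])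
  have NA: "norm (N x) = norm (A x)" for x unfolding N_def using w by (simp add: norm_scaleC)
  have qT1: "qf T1 x = Re (cnj w * cinner (A x) x)" for x
  proof -
    have c1: "cinner (N' x) x = cnj (cinner (N x) x)"
      using adj'[of x x] cinner_commute[of x "N x"] by simp
    have "qf T1 x = Re ((1/2) * (cinner (N x) x + cinner (N' x) x))"
      unfolding qf_def rin_def T1_def by (simp add: cinner_scaleC_left cinner_add_left)
    also have "\<dots> = Re (cinner (N x) x)" unfolding c1 by simp
    also have "cinner (N x) x = cnj w * cinner (A x) x" unfolding N_def by (simp add: cinner_scaleC_left)
    finally show ?thesis .
  qed
  have qQ1: "qf Q1 x = M^2 * (norm x)^2 - (norm (A x))^2" for x
  proof -
    have "qf Q1 x = M^2 * (norm x)^2 - Re (cinner (N' (N x)) x)"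
      unfolding qf_def rin_def Q1_def by (simp add: cinner_diff_left cinner_scaleC_left cinner_self)
    also have "Re (cinner (N' (N x)) x) = (norm (A x))^2"
      using adj'[of "N x" x] NA[of x] by (simp add: Re_cinner_self)
    finally show ?thesis .
  qed
  have Q1pos: "0 \<le> qf Q1 x" for x
  proof -
    have "(norm (A x))^2 \<le> (M * norm x)^2" using bnd[of x] by (simp add: power_mono)
    then show ?thesis unfolding qQ1 by (simp add: power_mult_distrib)
  qed
  define beta where "beta = Re (cnj w * l)"
  have hyp1: "\<exists>x. norm x = 1 \<and> qf Q1 x < e \<and> beta - e < qf T1 x" if e: "e > 0" for e
  proof -
    define e' where "e' = e / (2*M + 1)"
    have e': "e' > 0" "e' \<le> e" unfolding e'_def using e M0 by (auto simp: field_simps)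
    obtain x where x: "norm x = 1" "\<bar>norm (A x) - M\<bar> < e'" "cmod (cinner (A x) x - l) < e'"
      using W0_E[OF l e'(1)] unfolding M_def by blast
    have aM: "norm (A x) \<le> M" using bnd[of x] x(1) by simp
    have "qf Q1 x = (M - norm (A x)) * (M + norm (A x))"
      using qQ1[of x] x(1) by (simp add: power2_eq_square algebra_simps)
    also have "\<dots> \<le> (M - norm (A x)) * (2*M + 1)" using aM M0 by (intro mult_left_mono) auto
    also have "\<dots> < e' * (2*M + 1)" using x(2) M0 by (intro mult_strict_right_mono) auto
    also have "\<dots> = e" unfolding e'_def using M0 by simp
    finally have q: "qf Q1 x < e" .
    have "beta - qf T1 x = Re (cnj w * (l - cinner (A x) x))"
      unfolding beta_def qT1 by (simp add: algebra_simps)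
    also have "\<dots> \<le> cmod (cnj w * (l - cinner (A x) x))" by (rule complex_Re_le_cmod)
    also have "\<dots> = cmod (cinner (A x) x - l)" using w by (simp add: norm_mult norm_minus_commute)
    finally have "beta - qf T1 x < e" using x(3) e' by linarith
    then show ?thesis using x(1) q by (intro exI[of _ x]) auto
  qed
  obtain b where b: "beta \<le> b" "\<And>e. e > 0 \<Longrightarrow> \<exists>y. norm y = 1 \<and> qf Q1 y < e \<and> norm (T1 y - scaleR b y) < e"
    using joint[OF T1bl T1sa Q1bl Q1sa cT1Q1 Q1pos hyp1] by blast
  define T1b where "T1b = (\<lambda>x. T1 x - scaleR b x)"
  define Q2 where "Q2 = (\<lambda>x. Q1 x + T1b (T1b x))"
  have T1bbl: "bounded_linear T1b" unfolding T1b_def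
    by (rule bounded_linear_sub[OF T1bl bounded_linear_scaleR_right])
  have T1bsa: "sa T1b" unfolding T1b_def by (rule sa_diff[OF T1sa sa_idscale])
  have Q2bl: "bounded_linear Q2" unfolding Q2_def
    by (rule bounded_linear_add[OF Q1bl bounded_linear_compose[OF T1bbl T1bbl]])
  have Q2sa: "sa Q2" unfolding Q2_def by (rule sa_add[OF Q1sa sa_sq[OF T1bsa]])
  have qQ2: "qf Q2 x = qf Q1 x + (norm (T1b x))^2" for x
    using qf_sq[OF T1bsa, of x] unfolding Q2_def qf_def by (simp add: rin_add_left)
  have Q2pos: "0 \<le> qf Q2 x" for x using Q1pos[of x] unfolding qQ2 by simp
  have cT2Q2: "T2 (Q2 x) = Q2 (T2 x)" for x
    unfolding Q2_def T1b_def
    by (simp add: bcl_add[OF T2c] bcl_diff[OF T2c] bcl_scaleR[OF T2c]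
        bcl_diff[OF T1c] bcl_scaleR[OF T1c] cT2Q1 cT2T1)
  obtain C2 where C2: "C2 > 0" "\<And>x. norm (T2 x) \<le> norm x * C2"
    using bounded_linear.pos_bounded[OF T2bl] by blast
  have hyp2: "\<exists>x. norm x = 1 \<and> qf Q2 x < e \<and> (- C2) - e < qf T2 x" if e: "e > 0" for e
  proof -
    define e' where "e' = min (e/2) 1"
    have e': "e' > 0" "e' \<le> e/2" "e' \<le> 1" unfolding e'_def using e by auto
    obtain y where y: "norm y = 1" "qf Q1 y < e'" "norm (T1 y - scaleR b y) < e'"
      using b(2)[OF e'(1)] by blast
    have "(norm (T1b y))^2 \<le> e'^2" unfolding T1b_def using y(3) by (simp add: power_mono)
    also have "\<dots> \<le> e'" using e' by (simp add: power2_eq_square mult_left_le_one_le)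
    finally have "qf Q2 y < e" unfolding qQ2 using y(2) e' by linarith
    moreover have "- C2 \<le> qf T2 y"
    proof -
      have "\<bar>qf T2 y\<bar> \<le> norm (T2 y) * norm y" unfolding qf_def by (rule rin_cs_abs)
      also have "\<dots> \<le> C2" using C2(2)[of y] y(1) by simp
      finally show ?thesis by linarith
    qed
    ultimately show ?thesis using y(1) e by (intro exI[of _ y]) auto
  qed
  obtain c where c: "\<And>e. e > 0 \<Longrightarrow> \<exists>y. norm y = 1 \<and> qf Q2 y < e \<and> norm (T2 y - scaleR c y) < e"
    using joint[OF T2bl T2sa Q2bl Q2sa cT2Q2 Q2pos hyp2] by blast
  define mu' where "mu' = Complex b c"
  define mu where "mu = w * mu'"
  have half: "scaleC (1/2) v + scaleC (1/2) v = v" for v :: 'a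
  proof -
    have "scaleC (1/2) v + scaleC (1/2) v = scaleC (1/2 + 1/2) v" by (simp only: scaleC_add_left)
    also have "\<dots> = v" by (simp add: scaleC_one)
    finally show ?thesis .
  qed
  have NT: "N x = T1 x + scaleC \<i> (T2 x)" for x
  proof -
    have "scaleC \<i> (T2 x) = scaleC (1/2) (N x) - scaleC (1/2) (N' x)"
      unfolding T2_def by (simp add: scaleC_scaleC scaleC_diff_right)
    then have "T1 x + scaleC \<i> (T2 x) = scaleC (1/2) (N x) + scaleC (1/2) (N x)"
      unfolding T1_def by (simp add: scaleC_add_right)
    then show ?thesis using half by simp
  qed
  have mus: "scaleC mu' v = scaleR b v + scaleC \<i> (scaleR c v)" for v :: 'a
  proof -
    have "mu' = complex_of_real b + \<i> * complex_of_real c" unfolding mu'_def by (simp add: complex_eq_iff)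
    then show ?thesis by (simp add: scaleC_add_left scaleC_scaleC[symmetric] scaleC_of_real)
  qed
  have app: "\<exists>y. norm y = 1 \<and> norm (A y - scaleC mu y) < 2*d \<and> M - norm (A y) < d" if d: "0 < d" "d \<le> 1" for d
  proof -
    have d2: "0 < d^2" using d by simp
    obtain y where y: "norm y = 1" "qf Q2 y < d^2" "norm (T2 y - scaleR c y) < d^2"
      using c[OF d2] by blast
    have dd: "d^2 \<le> d" using d by (simp add: power2_eq_square mult_left_le_one_le)
    have "(norm (T1b y))^2 < d^2" using y(2) Q1pos[of y] unfolding qQ2 by linarith
    then have t1: "norm (T1 y - scaleR b y) < d" unfolding T1b_def using d by (simp add: power_less_imp_less_base)
    have q1: "qf Q1 y < d^2" using y(2) unfolding qQ2 by (smt (verit) zero_le_power2)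
    have "N y - scaleC mu' y = (T1 y - scaleR b y) + scaleC \<i> (T2 y - scaleR c y)"
      unfolding NT mus by (simp add: scaleC_diff_right algebra_simps)
    then have "norm (N y - scaleC mu' y) \<le> norm (T1 y - scaleR b y) + norm (T2 y - scaleR c y)"
      using norm_triangle_ineq[of "T1 y - scaleR b y" "scaleC \<i> (T2 y - scaleR c y)"] by (simp add: norm_scaleC)
    then have nN: "norm (N y - scaleC mu' y) < 2*d" using t1 y(3) dd by linarith
    have "A y - scaleC mu y = scaleC w (N y - scaleC mu' y)"
      unfolding mu_def AN[of y] by (simp add: scaleC_diff_right scaleC_scaleC)
    then have nA: "norm (A y - scaleC mu y) < 2*d" using nN w by (simp add: norm_scaleC)
    have aM: "norm (A y) \<le> M" using bnd[of y] y(1) by simp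
    have "(M - norm (A y))^2 \<le> (M - norm (A y)) * (M + norm (A y))"
      using aM by (simp add: power2_eq_square mult_left_mono)
    also have "\<dots> = qf Q1 y" using qQ1[of y] y(1) by (simp add: power2_eq_square algebra_simps)
    also have "\<dots> < d^2" by (rule q1)
    finally have "M - norm (A y) < d" using d by (simp add: power_less_imp_less_base)
    then show ?thesis using y(1) nA by blast
  qed
  have ev: "approx_ev A mu" unfolding approx_ev_def
  proof (intro allI impI)
    fix e :: real assume e: "e > 0"
    obtain y where "norm y = 1" "norm (A y - scaleC mu y) < 2 * min (e/2) 1"
      using app[of "min (e/2) 1"] e by auto
    then show "\<exists>x. norm x = 1 \<and> norm (A x - scaleC mu x) < e" by (intro exI[of _ y]) auto
  qed
  have cm: "cmod mu = M"
  proof (rule ccontr)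
    assume ne: "cmod mu \<noteq> M"
    define d where "d = min 1 (\<bar>cmod mu - M\<bar> / 3)"
    have d: "0 < d" "d \<le> 1" unfolding d_def using ne by auto
    obtain y where y: "norm y = 1" "norm (A y - scaleC mu y) < 2*d" "M - norm (A y) < d"
      using app[OF d] by blast
    have "\<bar>norm (A y) - norm (scaleC mu y)\<bar> \<le> norm (A y - scaleC mu y)" by (rule norm_triangle_ineq3)
    then have "\<bar>norm (A y) - cmod mu\<bar> < 2*d" using y by (simp add: norm_scaleC)
    moreover have "norm (A y) \<le> M" using bnd[of y] y(1) by simp
    ultimately have "\<bar>cmod mu - M\<bar> < 3*d" using y(3) by linarith
    moreover have "3*d \<le> \<bar>cmod mu - M\<bar>" unfolding d_def min_def by auto
    ultimately show False by simp
  qed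
  have re: "Re (cnj w * mu) = b"
  proof -
    have "cnj w * mu = (cnj w * w) * mu'" unfolding mu_def by (simp add: mult.assoc)
    also have "cnj w * w = 1" using complex_norm_square[of w] w by (simp add: mult.commute)
    finally show ?thesis unfolding mu'_def by simp
  qed
  show ?thesis
    using approx_ev_spectrum[OF ev] cm re b(1) unfolding beta_def M_def by blast
qed

lemma spectrum_closed:
  fixes A :: "'a::chilbert_space \<Rightarrow> 'a"
  assumes nA: "normal_op A"
  shows "closed (op_spectrum A)"
  unfolding closed_limpt
proof (intro allI impI)
  fix m assume lim: "m islimpt op_spectrum A"
  have "approx_ev A m" unfolding approx_ev_def
  proof (intro allI impI)
    fix e :: real assume e: "e > 0"
    obtain m' where m': "m' \<in> op_spectrum A" "dist m' m < e/2"
      using lim e unfolding islimpt_approachable by (metis half_gt_zero)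
    obtain x where x: "norm x = 1" "norm (A x - scaleC m' x) < e/2"
      using spectrum_approx_ev[OF nA m'(1)] e unfolding approx_ev_def by (metis half_gt_zero)
    have eq: "A x - scaleC m x = (A x - scaleC m' x) + scaleC (m' - m) x"
      by (simp add: scaleC_diff_left algebra_simps)
    have "norm (A x - scaleC m x) \<le> norm (A x - scaleC m' x) + cmod (m' - m)"
      by (subst eq, rule order_trans[OF norm_triangle_ineq]) (simp add: norm_scaleC x(1))
    then have "norm (A x - scaleC m x) < e" using x(2) m'(2) by (simp add: dist_norm)
    then show "\<exists>x. norm x = 1 \<and> norm (A x - scaleC m x) < e" using x(1) by blast
  qed
  then show "m \<in> op_spectrum A" by (rule approx_ev_spectrum)
qed

lemma spectrum_bounded:
  fixes A :: "'a::chilbert_space \<Rightarrow> 'a"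
  assumes nA: "normal_op A" and m: "m \<in> op_spectrum A"
  shows "cmod m \<le> onorm A"
proof (rule field_le_epsilon)
  fix e :: real assume e: "e > 0"
  have A: "bounded_clinear A" using nA unfolding normal_op_def by blast
  obtain x where x: "norm x = 1" "norm (A x - scaleC m x) < e"
    using spectrum_approx_ev[OF nA m] e unfolding approx_ev_def by blast
  have "cmod m = norm (scaleC m x)" using x(1) by (simp add: norm_scaleC)
  also have "\<dots> = norm (A x - (A x - scaleC m x))" by simp
  also have "\<dots> \<le> norm (A x) + norm (A x - scaleC m x)" by (rule norm_triangle_ineq4)
  also have "\<dots> \<le> onorm A + e" using bcl_norm[OF A, of x] x by simp
  finally show "cmod m \<le> onorm A + e" .
qed

lemma W0_subset_hull:
  fixes A :: "'a::chilbert_space \<Rightarrow> 'a"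
  assumes nA: "normal_op A"
  shows "max_numerical_range A \<subseteq> convex hull (op_spectrum A \<inter> {z. cmod z = onorm A})"
proof
  fix l assume l: "l \<in> max_numerical_range A"
  define S where "S = op_spectrum A \<inter> {z. cmod z = onorm A}"
  have sph: "{z. cmod z = onorm A} = sphere 0 (onorm A)" unfolding sphere_def by (simp add: dist_norm)
  have cS: "compact S"
  proof -
    have "closed S" unfolding S_def sph
      by (rule closed_Int[OF spectrum_closed[OF nA] closed_sphere])
    moreover have "bounded S"
    proof (rule bounded_subset[OF bounded_cball])
      show "S \<subseteq> cball 0 (onorm A)"
      proof
        fix z assume "z \<in> S"
        then have "cmod z \<le> onorm A" unfolding S_def by simp
        then show "z \<in> cball 0 (onorm A)" by (simp add: dist_norm)
      qed
    qed
    ultimately show ?thesis by (simp add: compact_eq_bounded_closed)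
  qed
  have cc: "closed (convex hull S)" by (rule compact_imp_closed[OF compact_convex_hull[OF cS]])
  show "l \<in> convex hull S"
  proof (rule ccontr)
    assume nl: "l \<notin> convex hull S"
    obtain a b where ab: "inner a l < b" "\<forall>x\<in>convex hull S. inner a x > b"
      using separating_hyperplane_closed_point[OF convex_convex_hull cc nl] by blast
    have one: "cmod (1::complex) = 1" by simp
    obtain mu0 where mu0: "mu0 \<in> op_spectrum A" "cmod mu0 = onorm A"
      using key5a[OF nA l one] by blast
    have "mu0 \<in> S" using mu0 unfolding S_def by blast
    then have "mu0 \<in> convex hull S" using hull_subset[of S convex] by (rule subsetD[rotated])
    then have "inner a mu0 > b" using ab(2) by blast
    then have a0: "a \<noteq> 0" using ab(1) by auto
    define w where "w = - a / of_real (cmod a)"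
    have w: "cmod w = 1" unfolding w_def using a0 by (simp add: norm_divide)
    obtain mu where mu: "mu \<in> op_spectrum A" "cmod mu = onorm A" "Re (cnj w * l) \<le> Re (cnj w * mu)"
      using key5a[OF nA l w] by blast
    have inner_eq: "inner a z = Re (cnj a * z)" for z by (simp add: inner_complex_def)
    have ca: "cmod a > 0" using a0 by simp
    have rw: "Re (cnj w * z) = - inner a z / cmod a" for z
    proof -
      have eq: "cnj w * z = - (cnj a * z) / of_real (cmod a)" unfolding w_def by simp
      have "Re (cnj w * z) = Re (- (cnj a * z)) / cmod a" by (simp only: eq Re_divide_of_real)
      also have "\<dots> = - Re (cnj a * z) / cmod a" by simp
      finally show ?thesis unfolding inner_eq .
    qed
    have "- inner a l / cmod a \<le> - inner a mu / cmod a" using mu(3) unfolding rw .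
    then have "inner a mu \<le> inner a l" using ca by (simp add: divide_le_cancel)
    moreover have "mu \<in> S" using mu(1,2) unfolding S_def by blast
    then have "mu \<in> convex hull S" using hull_subset[of S convex] by (rule subsetD[rotated])
    then have "inner a mu > b" using ab(2) by blast
    ultimately show False using ab(1) by linarith
  qed
qed

theorem theorem4:
  fixes A :: "'a::chilbert_space \<Rightarrow> 'a"
  assumes "\<exists>x::'a. x \<noteq> 0"
    and "normal_op A"
  shows "max_numerical_range A = convex hull (op_spectrum A \<inter> {z. cmod z = onorm A})"
  using W0_subset_hull[OF assms(2)] hull_subset_W0[OF assms] by blast

end
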